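(* Let $\mathcal K$ be a 2-category. (1) The following data form a 2-category $\mathrm{Mnd}^\iota(\mathcal K)$: 0-cells are monads in $\mathcal K$; 1-cells $t\to t'$ are the 1-cells $(V,\psi)$ of $\mathrm{EM}^w(\mathcal K)$; 2-cells $(V,\psi)\Rightarrow(W,\phi)$ are 2-cells $\omega:V\Rightarrow W$ of $\mathcal K$ satisfying $\omega t\ast\psi=W\mu\ast\phi t\ast t'\omega t\ast t'\psi\ast t'\eta'V$; horizontal and vertical compositions are those of $\mathcal K$. Moreover there is a 2-functor $G^\iota:\mathrm{Mnd}^\iota(\mathcal K)\to\mathrm{EM}^w(\mathcal K)$ which is the identity on 0-cells and 1-cells and sends a 2-cell $\omega:(V,\psi)\Rightarrow(W,\phi)$ to $\omega t\ast\psi\ast\eta'V$. (2) The following data form a 2-category $\mathrm{Mnd}^\pi(\mathcal K)$: 0-cells are monads in $\mathcal K$; 1-cells are the 1-cells of $\mathrm{EM}^w(\mathcal K)$; 2-cells $(V,\psi)\Rightarrow(W,\phi)$ are 2-cells $\omega:V\Rightarrow W$ of $\mathcal K$ satisfying $\phi\ast t'\omega=W\mu\ast\phi t\ast\eta'Wt\ast\omega t\ast\psi$; compositions are those of $\mathcal K$. Moreover there is a 2-functor $G^\pi:\mathrm{Mnd}^\pi(\mathcal K)\to\mathrm{EM}^w(\mathcal K)$ which is the identity on 0-cells and 1-cells and sends $\omega$ to $\phi\ast\eta'W\ast\omega$.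
   Context: Conventions in a 2-category $\mathcal K$: horizontal composition and whiskering by juxtaposition in the order of functor composition; identity 1-cell of $k$ written $k$, identity 2-cell of $V$ written $V$; vertical composition $\ast$ with $\alpha\ast\beta$ meaning $\beta$ then $\alpha$. A monad $(t,\mu,\eta)$ on $k$: $t:k\to k$, $\mu:tt\Rightarrow t$, $\eta:k\Rightarrow t$, associative and unital; in the 2-categories below, horizontal composite of 1-cells $(V,\psi):t\to t'$ and $(V',\psi'):t'\to t''$ is $(V'V,V'\psi\ast\psi'V)$ and the identity 1-cell on $(t,\mu,\eta)$ (on $k$) is $(k,t)$. The 2-category $\mathrm{EM}^w(\mathcal K)$: 0-cells are monads; a 1-cell $(t,\mu,\eta)\to(t',\mu',\eta')$ ($t$ on $k$, $t'$ on $k'$) is $(V,\psi)$, $V:k\to k'$, $\psi:t'V\Rightarrow Vt$, with $V\mu\ast\psi t\ast t'\psi=\psi\ast\mu'V$; a 2-cell $(V,\psi)\Rightarrow(W,\phi)$ is $\varrho:V\Rightarrow Wt$ with $W\mu\ast\varrho t\ast\psi=W\mu\ast\phi t\ast t'\varrho$ and $\varrho=W\mu\ast\phi t\ast\eta'Wt\ast\varrho$; identity 2-cell on $(W,\phi)$ is $\phi\ast\eta'W$; horizontal composite of 2-cells $\varrho:(V,\psi)\Rightarrow(W,\phi)$, $\varrho':(V',\psi')\Rightarrow(W',\phi')$ is $W'W\mu\ast W'\varrho t\ast W'\psi\ast\varrho'V$; vertical composite of $\varrho$ and $\tau:(W,\phi)\Rightarrow(U,\theta)$ is $U\mu\ast\tau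 t\ast\varrho$. *)

theory Defs
  imports Main
begin

text \<open>Composition is
written in the order of functor composition: tc_comp1 g f is g after f,
tc_hcomp beta alpha is beta alpha, tc_vcomp beta alpha is alpha then beta.\<close>

record ('o, 'a, 'c) two_cat =
  tc_ob    :: "'o set"
  tc_hom   :: "'a set"
  tc_cell  :: "'c set"
  tc_src1  :: "'a \<Rightarrow> 'o"
  tc_tgt1  :: "'a \<Rightarrow> 'o"
  tc_src2  :: "'c \<Rightarrow> 'a"
  tc_tgt2  :: "'c \<Rightarrow> 'a"
  tc_id1   :: "'o \<Rightarrow> 'a"
  tc_id2   :: "'a \<Rightarrow> 'c"
  tc_comp1 :: "'a \<Rightarrow> 'a \<Rightarrow> 'a"
  tc_hcomp :: "'c \<Rightarrow> 'c \<Rightarrow> 'c"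
  tc_vcomp :: "'c \<Rightarrow> 'c \<Rightarrow> 'c"

definition two_category :: "('o, 'a, 'c, 'm) two_cat_scheme \<Rightarrow> bool" where
  "two_category K \<longleftrightarrow>
    (\<forall>x\<in>tc_ob K. tc_id1 K x \<in> tc_hom K \<and> tc_src1 K (tc_id1 K x) = x \<and> tc_tgt1 K (tc_id1 K x) = x) \<and>
    (\<forall>f\<in>tc_hom K. tc_src1 K f \<in> tc_ob K \<and> tc_tgt1 K f \<in> tc_ob K) \<and>
    (\<forall>f\<in>tc_hom K. \<forall>g\<in>tc_hom K. tc_src1 K g = tc_tgt1 K f \<longrightarrow>
        tc_comp1 K g f \<in> tc_hom K \<and> tc_src1 K (tc_comp1 K g f) = tc_src1 K f
        \<and> tc_tgt1 K (tc_comp1 K g f) = tc_tgt1 K g) \<and>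
    (\<forall>f\<in>tc_hom K. tc_comp1 K (tc_id1 K (tc_tgt1 K f)) f = f \<and> tc_comp1 K f (tc_id1 K (tc_src1 K f)) = f) \<and>
    (\<forall>f\<in>tc_hom K. \<forall>g\<in>tc_hom K. \<forall>h\<in>tc_hom K.
        tc_src1 K g = tc_tgt1 K f \<longrightarrow> tc_src1 K h = tc_tgt1 K g \<longrightarrow>
        tc_comp1 K h (tc_comp1 K g f) = tc_comp1 K (tc_comp1 K h g) f) \<and>
    (\<forall>\<alpha>\<in>tc_cell K. tc_src2 K \<alpha> \<in> tc_hom K \<and> tc_tgt2 K \<alpha> \<in> tc_hom K
        \<and> tc_src1 K (tc_src2 K \<alpha>) = tc_src1 K (tc_tgt2 K \<alpha>)
        \<and> tc_tgt1 K (tc_src2 K \<alpha>) = tc_tgt1 K (tc_tgt2 K \<alpha>)) \<and>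
    (\<forall>f\<in>tc_hom K. tc_id2 K f \<in> tc_cell K \<and> tc_src2 K (tc_id2 K f) = f \<and> tc_tgt2 K (tc_id2 K f) = f) \<and>
    (\<forall>\<alpha>\<in>tc_cell K. \<forall>\<beta>\<in>tc_cell K. tc_src2 K \<beta> = tc_tgt2 K \<alpha> \<longrightarrow>
        tc_vcomp K \<beta> \<alpha> \<in> tc_cell K \<and> tc_src2 K (tc_vcomp K \<beta> \<alpha>) = tc_src2 K \<alpha>
        \<and> tc_tgt2 K (tc_vcomp K \<beta> \<alpha>) = tc_tgt2 K \<beta>) \<and>
    (\<forall>\<alpha>\<in>tc_cell K. tc_vcomp K (tc_id2 K (tc_tgt2 K \<alpha>)) \<alpha> = \<alpha>
        \<and> tc_vcomp K \<alpha> (tc_id2 K (tc_src2 K \<alpha>)) = \<alpha>) \<and>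
    (\<forall>\<alpha>\<in>tc_cell K. \<forall>\<beta>\<in>tc_cell K. \<forall>\<gamma>\<in>tc_cell K.
        tc_src2 K \<beta> = tc_tgt2 K \<alpha> \<longrightarrow> tc_src2 K \<gamma> = tc_tgt2 K \<beta> \<longrightarrow>
        tc_vcomp K \<gamma> (tc_vcomp K \<beta> \<alpha>) = tc_vcomp K (tc_vcomp K \<gamma> \<beta>) \<alpha>) \<and>
    (\<forall>\<alpha>\<in>tc_cell K. \<forall>\<beta>\<in>tc_cell K. tc_src1 K (tc_src2 K \<beta>) = tc_tgt1 K (tc_src2 K \<alpha>) \<longrightarrow>
        tc_hcomp K \<beta> \<alpha> \<in> tc_cell K
        \<and> tc_src2 K (tc_hcomp K \<beta> \<alpha>) = tc_comp1 K (tc_src2 K \<beta>) (tc_src2 K \<alpha>)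
        \<and> tc_tgt2 K (tc_hcomp K \<beta> \<alpha>) = tc_comp1 K (tc_tgt2 K \<beta>) (tc_tgt2 K \<alpha>)) \<and>
    (\<forall>\<alpha>\<in>tc_cell K. tc_hcomp K (tc_id2 K (tc_id1 K (tc_tgt1 K (tc_src2 K \<alpha>)))) \<alpha> = \<alpha>
        \<and> tc_hcomp K \<alpha> (tc_id2 K (tc_id1 K (tc_src1 K (tc_src2 K \<alpha>)))) = \<alpha>) \<and>
    (\<forall>\<alpha>\<in>tc_cell K. \<forall>\<beta>\<in>tc_cell K. \<forall>\<gamma>\<in>tc_cell K.
        tc_src1 K (tc_src2 K \<beta>) = tc_tgt1 K (tc_src2 K \<alpha>) \<longrightarrow>
        tc_src1 K (tc_src2 K \<gamma>) = tc_tgt1 K (tc_src2 K \<beta>) \<longrightarrow>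
        tc_hcomp K \<gamma> (tc_hcomp K \<beta> \<alpha>) = tc_hcomp K (tc_hcomp K \<gamma> \<beta>) \<alpha>) \<and>
    (\<forall>f\<in>tc_hom K. \<forall>g\<in>tc_hom K. tc_src1 K g = tc_tgt1 K f \<longrightarrow>
        tc_hcomp K (tc_id2 K g) (tc_id2 K f) = tc_id2 K (tc_comp1 K g f)) \<and>
    (\<forall>\<alpha>\<in>tc_cell K. \<forall>\<beta>\<in>tc_cell K. \<forall>\<gamma>\<in>tc_cell K. \<forall>\<delta>\<in>tc_cell K.
        tc_src2 K \<beta> = tc_tgt2 K \<alpha> \<longrightarrow> tc_src2 K \<delta> = tc_tgt2 K \<gamma> \<longrightarrow>
        tc_src1 K (tc_src2 K \<gamma>) = tc_tgt1 K (tc_src2 K \<alpha>) \<longrightarrow>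
        tc_hcomp K (tc_vcomp K \<delta> \<gamma>) (tc_vcomp K \<beta> \<alpha>)
          = tc_vcomp K (tc_hcomp K \<delta> \<beta>) (tc_hcomp K \<gamma> \<alpha>))"

definition two_functor ::
  "('o, 'a, 'c, 'm) two_cat_scheme \<Rightarrow> ('p, 'b, 'd, 'n) two_cat_scheme
   \<Rightarrow> ('o \<Rightarrow> 'p) \<Rightarrow> ('a \<Rightarrow> 'b) \<Rightarrow> ('c \<Rightarrow> 'd) \<Rightarrow> bool" where
  "two_functor K L F0 F1 F2 \<longleftrightarrow>
    (\<forall>x\<in>tc_ob K. F0 x \<in> tc_ob L) \<and>
    (\<forall>f\<in>tc_hom K. F1 f \<in> tc_hom L \<and> tc_src1 L (F1 f) = F0 (tc_src1 K f)
        \<and> tc_tgt1 L (F1 f) = F0 (tc_tgt1 K f)) \<and>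
    (\<forall>\<alpha>\<in>tc_cell K. F2 \<alpha> \<in> tc_cell L \<and> tc_src2 L (F2 \<alpha>) = F1 (tc_src2 K \<alpha>)
        \<and> tc_tgt2 L (F2 \<alpha>) = F1 (tc_tgt2 K \<alpha>)) \<and>
    (\<forall>x\<in>tc_ob K. F1 (tc_id1 K x) = tc_id1 L (F0 x)) \<and>
    (\<forall>f\<in>tc_hom K. \<forall>g\<in>tc_hom K. tc_src1 K g = tc_tgt1 K f \<longrightarrow>
        F1 (tc_comp1 K g f) = tc_comp1 L (F1 g) (F1 f)) \<and>
    (\<forall>f\<in>tc_hom K. F2 (tc_id2 K f) = tc_id2 L (F1 f)) \<and>
    (\<forall>\<alpha>\<in>tc_cell K. \<forall>\<beta>\<in>tc_cell K. tc_src2 K \<beta> = tc_tgt2 K \<alpha> \<longrightarrow>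
        F2 (tc_vcomp K \<beta> \<alpha>) = tc_vcomp L (F2 \<beta>) (F2 \<alpha>)) \<and>
    (\<forall>\<alpha>\<in>tc_cell K. \<forall>\<beta>\<in>tc_cell K. tc_src1 K (tc_src2 K \<beta>) = tc_tgt1 K (tc_src2 K \<alpha>) \<longrightarrow>
        F2 (tc_hcomp K \<beta> \<alpha>) = tc_hcomp L (F2 \<beta>) (F2 \<alpha>))"

definition wl :: "('o, 'a, 'c, 'm) two_cat_scheme \<Rightarrow> 'a \<Rightarrow> 'c \<Rightarrow> 'c" where
  "wl K f \<alpha> = tc_hcomp K (tc_id2 K f) \<alpha>"

definition wr :: "('o, 'a, 'c, 'm) two_cat_scheme \<Rightarrow> 'c \<Rightarrow> 'a \<Rightarrow> 'c" where
  "wr K \<alpha> f = tc_hcomp K \<alpha> (tc_id2 K f)"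

record ('o, 'a, 'c) monad =
  mobj  :: 'o
  mfun  :: 'a
  mmult :: 'c
  munit :: 'c

definition is_monad :: "('o, 'a, 'c, 'm) two_cat_scheme \<Rightarrow> ('o, 'a, 'c) monad \<Rightarrow> bool" where
  "is_monad K m \<longleftrightarrow>
    (let k = mobj m; t = mfun m; \<mu> = mmult m; \<eta> = munit m in
      k \<in> tc_ob K \<and> t \<in> tc_hom K \<and> tc_src1 K t = k \<and> tc_tgt1 K t = k \<and>
      \<mu> \<in> tc_cell K \<and> tc_src2 K \<mu> = tc_comp1 K t t \<and> tc_tgt2 K \<mu> = t \<and>
      \<eta> \<in> tc_cell K \<and> tc_src2 K \<eta> = tc_id1 K k \<and> tc_tgt2 K \<eta> = t \<and>
      tc_vcomp K \<mu> (wr K \<mu> t) = tc_vcomp K \<mu> (wl K t \<mu>) \<and>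
      tc_vcomp K \<mu> (wr K \<eta> t) = tc_id2 K t \<and>
      tc_vcomp K \<mu> (wl K t \<eta>) = tc_id2 K t)"

record ('o, 'a, 'c) mmor =
  msrc :: "('o, 'a, 'c) monad"
  mtgt :: "('o, 'a, 'c) monad"
  mV   :: 'a
  mpsi :: 'c

definition is_em1 :: "('o, 'a, 'c, 'm) two_cat_scheme \<Rightarrow> ('o, 'a, 'c) mmor \<Rightarrow> bool" where
  "is_em1 K f \<longleftrightarrow>
    (let t = mfun (msrc f); \<mu> = mmult (msrc f); t' = mfun (mtgt f); \<mu>' = mmult (mtgt f);
         V = mV f; \<psi> = mpsi f in
      is_monad K (msrc f) \<and> is_monad K (mtgt f) \<and>
      V \<in> tc_hom K \<and> tc_src1 K V = mobj (msrc f) \<and> tc_tgt1 K V = mobj (mtgt f) \<and>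
      \<psi> \<in> tc_cell K \<and> tc_src2 K \<psi> = tc_comp1 K t' V \<and> tc_tgt2 K \<psi> = tc_comp1 K V t \<and>
      tc_vcomp K (wl K V \<mu>) (tc_vcomp K (wr K \<psi> t) (wl K t' \<psi>)) = tc_vcomp K \<psi> (wr K \<mu>' V))"

record ('o, 'a, 'c) mcell =
  csrc :: "('o, 'a, 'c) mmor"
  ctgt :: "('o, 'a, 'c) mmor"
  cval :: 'c

definition parallel_mcell :: "('o, 'a, 'c, 'm) two_cat_scheme \<Rightarrow> ('o, 'a, 'c) mcell \<Rightarrow> bool" where
  "parallel_mcell K c \<longleftrightarrow> is_em1 K (csrc c) \<and> is_em1 K (ctgt c) \<and>
     msrc (csrc c) = msrc (ctgt c) \<and> mtgt (csrc c) = mtgt (ctgt c) \<and> cval c \<in> tc_cell K"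

definition m_id1 :: "('o, 'a, 'c, 'm) two_cat_scheme \<Rightarrow> ('o, 'a, 'c) monad \<Rightarrow> ('o, 'a, 'c) mmor" where
  "m_id1 K m = \<lparr>msrc = m, mtgt = m, mV = tc_id1 K (mobj m), mpsi = tc_id2 K (mfun m)\<rparr>"

definition m_comp1 :: "('o, 'a, 'c, 'm) two_cat_scheme \<Rightarrow> ('o, 'a, 'c) mmor \<Rightarrow> ('o, 'a, 'c) mmor \<Rightarrow> ('o, 'a, 'c) mmor" where
  "m_comp1 K g f = \<lparr>msrc = msrc f, mtgt = mtgt g, mV = tc_comp1 K (mV g) (mV f),
      mpsi = tc_vcomp K (wl K (mV g) (mpsi f)) (wr K (mpsi g) (mV f))\<rparr>"

definition em_cell_cond :: "('o, 'a, 'c, 'm) two_cat_scheme \<Rightarrow> ('o, 'a, 'c) mcell \<Rightarrow> bool" where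
  "em_cell_cond K c \<longleftrightarrow>
    (let t = mfun (msrc (csrc c)); \<mu> = mmult (msrc (csrc c));
         t' = mfun (mtgt (csrc c)); \<eta>' = munit (mtgt (csrc c));
         V = mV (csrc c); \<psi> = mpsi (csrc c); W = mV (ctgt c); \<phi> = mpsi (ctgt c); \<rho> = cval c in
      tc_src2 K \<rho> = V \<and> tc_tgt2 K \<rho> = tc_comp1 K W t \<and>
      tc_vcomp K (wl K W \<mu>) (tc_vcomp K (wr K \<rho> t) \<psi>)
        = tc_vcomp K (wl K W \<mu>) (tc_vcomp K (wr K \<phi> t) (wl K t' \<rho>)) \<and>
      \<rho> = tc_vcomp K (wl K W \<mu>) (tc_vcomp K (wr K \<phi> t) (tc_vcomp K (wr K (wr K \<eta>' W) t) \<rho>)))"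

definition em_w :: "('o, 'a, 'c, 'm) two_cat_scheme \<Rightarrow>
    (('o, 'a, 'c) monad, ('o, 'a, 'c) mmor, ('o, 'a, 'c) mcell) two_cat" where
  "em_w K = \<lparr>
     tc_ob = {m. is_monad K m},
     tc_hom = {f. is_em1 K f},
     tc_cell = {c. parallel_mcell K c \<and> em_cell_cond K c},
     tc_src1 = msrc, tc_tgt1 = mtgt, tc_src2 = csrc, tc_tgt2 = ctgt,
     tc_id1 = m_id1 K,
     tc_id2 = (\<lambda>f. \<lparr>csrc = f, ctgt = f,
                     cval = tc_vcomp K (mpsi f) (wr K (munit (mtgt f)) (mV f))\<rparr>),
     tc_comp1 = m_comp1 K,
     tc_hcomp = (\<lambda>c' c. \<lparr>csrc = m_comp1 K (csrc c') (csrc c), ctgt = m_comp1 K (ctgt c') (ctgt c),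
        cval = (let t = mfun (msrc (csrc c)); \<mu> = mmult (msrc (csrc c));
                    V = mV (csrc c); \<psi> = mpsi (csrc c); W = mV (ctgt c);
                    W' = mV (ctgt c') in
                 tc_vcomp K (wl K (tc_comp1 K W' W) \<mu>)
                  (tc_vcomp K (wl K W' (wr K (cval c) t))
                    (tc_vcomp K (wl K W' \<psi>) (wr K (cval c') V))))\<rparr>),
     tc_vcomp = (\<lambda>d c. \<lparr>csrc = csrc c, ctgt = ctgt d,
        cval = tc_vcomp K (wl K (mV (ctgt d)) (mmult (msrc (csrc c))))
                 (tc_vcomp K (wr K (cval d) (mfun (msrc (csrc c)))) (cval c))\<rparr>)
   \<rparr>"

definition mnd_cat :: "('o, 'a, 'c, 'm) two_cat_scheme \<Rightarrow> (('o, 'a, 'c) mcell \<Rightarrow> bool) \<Rightarrow>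
    (('o, 'a, 'c) monad, ('o, 'a, 'c) mmor, ('o, 'a, 'c) mcell) two_cat" where
  "mnd_cat K P = \<lparr>
     tc_ob = {m. is_monad K m},
     tc_hom = {f. is_em1 K f},
     tc_cell = {c. parallel_mcell K c \<and> tc_src2 K (cval c) = mV (csrc c)
                   \<and> tc_tgt2 K (cval c) = mV (ctgt c) \<and> P c},
     tc_src1 = msrc, tc_tgt1 = mtgt, tc_src2 = csrc, tc_tgt2 = ctgt,
     tc_id1 = m_id1 K,
     tc_id2 = (\<lambda>f. \<lparr>csrc = f, ctgt = f, cval = tc_id2 K (mV f)\<rparr>),
     tc_comp1 = m_comp1 K,
     tc_hcomp = (\<lambda>c' c. \<lparr>csrc = m_comp1 K (csrc c') (csrc c), ctgt = m_comp1 K (ctgt c') (ctgt c),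
                         cval = tc_hcomp K (cval c') (cval c)\<rparr>),
     tc_vcomp = (\<lambda>d c. \<lparr>csrc = csrc c, ctgt = ctgt d, cval = tc_vcomp K (cval d) (cval c)\<rparr>)
   \<rparr>"

definition iota_cond :: "('o, 'a, 'c, 'm) two_cat_scheme \<Rightarrow> ('o, 'a, 'c) mcell \<Rightarrow> bool" where
  "iota_cond K c \<longleftrightarrow>
    (let t = mfun (msrc (csrc c)); \<mu> = mmult (msrc (csrc c));
         t' = mfun (mtgt (csrc c)); \<eta>' = munit (mtgt (csrc c));
         V = mV (csrc c); \<psi> = mpsi (csrc c); W = mV (ctgt c); \<phi> = mpsi (ctgt c); \<omega> = cval c in
      tc_vcomp K (wr K \<omega> t) \<psi>
        = tc_vcomp K (wl K W \<mu>) (tc_vcomp K (wr K \<phi> t) (tc_vcomp K (wl K t' (wr K \<omega> t))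
            (tc_vcomp K (wl K t' \<psi>) (wl K t' (wr K \<eta>' V))))))"

definition pi_cond :: "('o, 'a, 'c, 'm) two_cat_scheme \<Rightarrow> ('o, 'a, 'c) mcell \<Rightarrow> bool" where
  "pi_cond K c \<longleftrightarrow>
    (let t = mfun (msrc (csrc c)); \<mu> = mmult (msrc (csrc c));
         t' = mfun (mtgt (csrc c)); \<eta>' = munit (mtgt (csrc c));
         \<psi> = mpsi (csrc c); W = mV (ctgt c); \<phi> = mpsi (ctgt c); \<omega> = cval c in
      tc_vcomp K \<phi> (wl K t' \<omega>)
        = tc_vcomp K (wl K W \<mu>) (tc_vcomp K (wr K \<phi> t) (tc_vcomp K (wr K (wr K \<eta>' W) t)
            (tc_vcomp K (wr K \<omega> t) \<psi>))))"

definition mnd_iota where "mnd_iota K = mnd_cat K (iota_cond K)"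
definition mnd_pi where "mnd_pi K = mnd_cat K (pi_cond K)"

definition G_iota :: "('o, 'a, 'c, 'm) two_cat_scheme \<Rightarrow> ('o, 'a, 'c) mcell \<Rightarrow> ('o, 'a, 'c) mcell" where
  "G_iota K c = c\<lparr>cval := tc_vcomp K (wr K (cval c) (mfun (msrc (csrc c))))
       (tc_vcomp K (mpsi (csrc c)) (wr K (munit (mtgt (csrc c))) (mV (csrc c))))\<rparr>"

definition G_pi :: "('o, 'a, 'c, 'm) two_cat_scheme \<Rightarrow> ('o, 'a, 'c) mcell \<Rightarrow> ('o, 'a, 'c) mcell" where
  "G_pi K c = c\<lparr>cval := tc_vcomp K (mpsi (ctgt c))
       (tc_vcomp K (wr K (munit (mtgt (csrc c))) (mV (ctgt c))) (cval c))\<rparr>"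

end

theory Submission
  imports Defs
begin


locale tcat =
  fixes K :: "('o,'a,'c) two_cat"
  assumes TC: "two_category K"
begin

abbreviation "Ob \<equiv> tc_ob K"
abbreviation "Hm \<equiv> tc_hom K"
abbreviation "Cl \<equiv> tc_cell K"
abbreviation "S1 \<equiv> tc_src1 K"
abbreviation "T1 \<equiv> tc_tgt1 K"
abbreviation "S2 \<equiv> tc_src2 K"
abbreviation "T2 \<equiv> tc_tgt2 K"
abbreviation "I1 \<equiv> tc_id1 K"
abbreviation "I2 \<equiv> tc_id2 K"
abbreviation "C1 \<equiv> tc_comp1 K"
abbreviation "HC \<equiv> tc_hcomp K"
abbreviation "VC \<equiv> tc_vcomp K"
abbreviation "WL \<equiv> wl K"
abbreviation "WR \<equiv> wr K"

lemma I1_hom[simp]: "x \<in> Ob \<Longrightarrow> I1 x \<in> Hm" and I1_src[simp]: "x \<in> Ob \<Longrightarrow> S1 (I1 x) = x"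
  and I1_tgt[simp]: "x \<in> Ob \<Longrightarrow> T1 (I1 x) = x"
  using TC[unfolded two_category_def, THEN conjunct1] by blast+

lemma hom_ob[simp]: "f \<in> Hm \<Longrightarrow> S1 f \<in> Ob" "f \<in> Hm \<Longrightarrow> T1 f \<in> Ob"
  using TC[unfolded two_category_def, THEN conjunct2, THEN conjunct1] by blast+

lemma C1_hom[simp]: "f \<in> Hm \<Longrightarrow> g \<in> Hm \<Longrightarrow> S1 g = T1 f \<Longrightarrow> C1 g f \<in> Hm"
  and C1_src[simp]: "f \<in> Hm \<Longrightarrow> g \<in> Hm \<Longrightarrow> S1 g = T1 f \<Longrightarrow> S1 (C1 g f) = S1 f"
  and C1_tgt[simp]: "f \<in> Hm \<Longrightarrow> g \<in> Hm \<Longrightarrow> S1 g = T1 f \<Longrightarrow> T1 (C1 g f) = T1 g"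
  using TC[unfolded two_category_def, THEN conjunct2, THEN conjunct2, THEN conjunct1] by blast+

lemma C1_idL[simp]: "f \<in> Hm \<Longrightarrow> x = T1 f \<Longrightarrow> C1 (I1 x) f = f"
  and C1_idR[simp]: "f \<in> Hm \<Longrightarrow> x = S1 f \<Longrightarrow> C1 f (I1 x) = f"
  using TC[unfolded two_category_def, THEN conjunct2, THEN conjunct2, THEN conjunct2, THEN conjunct1] by blast+

lemma C1_assoc[simp]: "f \<in> Hm \<Longrightarrow> g \<in> Hm \<Longrightarrow> h \<in> Hm \<Longrightarrow> S1 g = T1 f \<Longrightarrow> S1 h = T1 g \<Longrightarrow>
   C1 (C1 h g) f = C1 h (C1 g f)"
  using TC[unfolded two_category_def, THEN conjunct2, THEN conjunct2, THEN conjunct2, THEN conjunct2, THEN conjunct1] by metis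

lemma cell_hom[simp]: "a \<in> Cl \<Longrightarrow> S2 a \<in> Hm" "a \<in> Cl \<Longrightarrow> T2 a \<in> Hm"
  using TC[unfolded two_category_def, THEN conjunct2, THEN conjunct2, THEN conjunct2, THEN conjunct2, THEN conjunct2, THEN conjunct1] by blast+

lemma cell_par: "a \<in> Cl \<Longrightarrow> S1 (T2 a) = S1 (S2 a)" "a \<in> Cl \<Longrightarrow> T1 (T2 a) = T1 (S2 a)"
  using TC[unfolded two_category_def, THEN conjunct2, THEN conjunct2, THEN conjunct2, THEN conjunct2, THEN conjunct2, THEN conjunct1] by metis+

lemma I2_cell[simp]: "f \<in> Hm \<Longrightarrow> I2 f \<in> Cl" and I2_src[simp]: "f \<in> Hm \<Longrightarrow> S2 (I2 f) = f"
  and I2_tgt[simp]: "f \<in> Hm \<Longrightarrow> T2 (I2 f) = f"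
  using TC[unfolded two_category_def, THEN conjunct2, THEN conjunct2, THEN conjunct2, THEN conjunct2, THEN conjunct2, THEN conjunct2, THEN conjunct1] by blast+

lemma VC_cell[simp]: "a \<in> Cl \<Longrightarrow> b \<in> Cl \<Longrightarrow> S2 b = T2 a \<Longrightarrow> VC b a \<in> Cl"
  and VC_src[simp]: "a \<in> Cl \<Longrightarrow> b \<in> Cl \<Longrightarrow> S2 b = T2 a \<Longrightarrow> S2 (VC b a) = S2 a"
  and VC_tgt[simp]: "a \<in> Cl \<Longrightarrow> b \<in> Cl \<Longrightarrow> S2 b = T2 a \<Longrightarrow> T2 (VC b a) = T2 b"
  using TC[unfolded two_category_def, THEN conjunct2, THEN conjunct2, THEN conjunct2, THEN conjunct2, THEN conjunct2, THEN conjunct2, THEN conjunct2, THEN conjunct1] by blast+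

lemma VC_idL[simp]: "a \<in> Cl \<Longrightarrow> f = T2 a \<Longrightarrow> VC (I2 f) a = a"
  and VC_idR[simp]: "a \<in> Cl \<Longrightarrow> f = S2 a \<Longrightarrow> VC a (I2 f) = a"
  using TC[unfolded two_category_def, THEN conjunct2, THEN conjunct2, THEN conjunct2, THEN conjunct2, THEN conjunct2, THEN conjunct2, THEN conjunct2, THEN conjunct2, THEN conjunct1] by blast+

lemma VC_assoc[simp]: "a \<in> Cl \<Longrightarrow> b \<in> Cl \<Longrightarrow> c \<in> Cl \<Longrightarrow> S2 b = T2 a \<Longrightarrow> S2 c = T2 b \<Longrightarrow>
   VC (VC c b) a = VC c (VC b a)"
  using TC[unfolded two_category_def, THEN conjunct2, THEN conjunct2, THEN conjunct2, THEN conjunct2, THEN conjunct2, THEN conjunct2, THEN conjunct2, THEN conjunct2, THEN conjunct2, THEN conjunct1] by metis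

lemma HC_cell: "a \<in> Cl \<Longrightarrow> b \<in> Cl \<Longrightarrow> S1 (S2 b) = T1 (S2 a) \<Longrightarrow> HC b a \<in> Cl"
  and HC_src: "a \<in> Cl \<Longrightarrow> b \<in> Cl \<Longrightarrow> S1 (S2 b) = T1 (S2 a) \<Longrightarrow> S2 (HC b a) = C1 (S2 b) (S2 a)"
  and HC_tgt: "a \<in> Cl \<Longrightarrow> b \<in> Cl \<Longrightarrow> S1 (S2 b) = T1 (S2 a) \<Longrightarrow> T2 (HC b a) = C1 (T2 b) (T2 a)"
  using TC[unfolded two_category_def, THEN conjunct2, THEN conjunct2, THEN conjunct2, THEN conjunct2, THEN conjunct2, THEN conjunct2, THEN conjunct2, THEN conjunct2, THEN conjunct2, THEN conjunct2, THEN conjunct1] by blast+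

lemma HC_unit: "a \<in> Cl \<Longrightarrow> HC (I2 (I1 (T1 (S2 a)))) a = a" "a \<in> Cl \<Longrightarrow> HC a (I2 (I1 (S1 (S2 a)))) = a"
  using TC[unfolded two_category_def, THEN conjunct2, THEN conjunct2, THEN conjunct2, THEN conjunct2, THEN conjunct2, THEN conjunct2, THEN conjunct2, THEN conjunct2, THEN conjunct2, THEN conjunct2, THEN conjunct2, THEN conjunct1] by blast+

lemma HC_assoc: "a \<in> Cl \<Longrightarrow> b \<in> Cl \<Longrightarrow> c \<in> Cl \<Longrightarrow> S1 (S2 b) = T1 (S2 a) \<Longrightarrow> S1 (S2 c) = T1 (S2 b) \<Longrightarrow>
   HC c (HC b a) = HC (HC c b) a"
  using TC[unfolded two_category_def, THEN conjunct2, THEN conjunct2, THEN conjunct2, THEN conjunct2, THEN conjunct2, THEN conjunct2, THEN conjunct2, THEN conjunct2, THEN conjunct2, THEN conjunct2, THEN conjunct2, THEN conjunct2, THEN conjunct1] by metis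

lemma HC_I2: "f \<in> Hm \<Longrightarrow> g \<in> Hm \<Longrightarrow> S1 g = T1 f \<Longrightarrow> HC (I2 g) (I2 f) = I2 (C1 g f)"
  using TC[unfolded two_category_def, THEN conjunct2, THEN conjunct2, THEN conjunct2, THEN conjunct2, THEN conjunct2, THEN conjunct2, THEN conjunct2, THEN conjunct2, THEN conjunct2, THEN conjunct2, THEN conjunct2, THEN conjunct2, THEN conjunct2, THEN conjunct1] by blast

lemma interchange: "a \<in> Cl \<Longrightarrow> b \<in> Cl \<Longrightarrow> c \<in> Cl \<Longrightarrow> d \<in> Cl \<Longrightarrow> S2 b = T2 a \<Longrightarrow> S2 d = T2 c \<Longrightarrow>
   S1 (S2 c) = T1 (S2 a) \<Longrightarrow> HC (VC d c) (VC b a) = VC (HC d b) (HC c a)"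
  using TC[unfolded two_category_def, THEN conjunct2, THEN conjunct2, THEN conjunct2, THEN conjunct2, THEN conjunct2, THEN conjunct2, THEN conjunct2, THEN conjunct2, THEN conjunct2, THEN conjunct2, THEN conjunct2, THEN conjunct2, THEN conjunct2, THEN conjunct2] by metis

lemma WL_cell[simp]: "f \<in> Hm \<Longrightarrow> a \<in> Cl \<Longrightarrow> S1 f = T1 (S2 a) \<Longrightarrow> WL f a \<in> Cl"
  and WL_src[simp]: "f \<in> Hm \<Longrightarrow> a \<in> Cl \<Longrightarrow> S1 f = T1 (S2 a) \<Longrightarrow> S2 (WL f a) = C1 f (S2 a)"
  and WL_tgt[simp]: "f \<in> Hm \<Longrightarrow> a \<in> Cl \<Longrightarrow> S1 f = T1 (S2 a) \<Longrightarrow> T2 (WL f a) = C1 f (T2 a)"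
  unfolding wl_def by (simp_all add: HC_cell HC_src HC_tgt)

lemma WR_cell[simp]: "f \<in> Hm \<Longrightarrow> a \<in> Cl \<Longrightarrow> S1 (S2 a) = T1 f \<Longrightarrow> WR a f \<in> Cl"
  and WR_src[simp]: "f \<in> Hm \<Longrightarrow> a \<in> Cl \<Longrightarrow> S1 (S2 a) = T1 f \<Longrightarrow> S2 (WR a f) = C1 (S2 a) f"
  and WR_tgt[simp]: "f \<in> Hm \<Longrightarrow> a \<in> Cl \<Longrightarrow> S1 (S2 a) = T1 f \<Longrightarrow> T2 (WR a f) = C1 (T2 a) f"
  unfolding wr_def by (simp_all add: HC_cell HC_src HC_tgt)

lemma WL_VC[simp]: "f \<in> Hm \<Longrightarrow> a \<in> Cl \<Longrightarrow> b \<in> Cl \<Longrightarrow> S2 b = T2 a \<Longrightarrow> S1 f = T1 (S2 a) \<Longrightarrow>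
   WL f (VC b a) = VC (WL f b) (WL f a)"
  unfolding wl_def using interchange[of a b "I2 f" "I2 f"] by simp

lemma WR_VC[simp]: "f \<in> Hm \<Longrightarrow> a \<in> Cl \<Longrightarrow> b \<in> Cl \<Longrightarrow> S2 b = T2 a \<Longrightarrow> S1 (S2 a) = T1 f \<Longrightarrow>
   WR (VC b a) f = VC (WR b f) (WR a f)"
  unfolding wr_def using interchange[of "I2 f" "I2 f" a b] by simp

lemma WL_WL[simp]: "f \<in> Hm \<Longrightarrow> g \<in> Hm \<Longrightarrow> a \<in> Cl \<Longrightarrow> S1 f = T1 g \<Longrightarrow> S1 g = T1 (S2 a) \<Longrightarrow>
   WL f (WL g a) = WL (C1 f g) a"
  unfolding wl_def by (simp add: HC_assoc HC_I2 HC_cell HC_src)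

lemma WR_WR[simp]: "f \<in> Hm \<Longrightarrow> g \<in> Hm \<Longrightarrow> a \<in> Cl \<Longrightarrow> S1 g = T1 f \<Longrightarrow> S1 (S2 a) = T1 g \<Longrightarrow>
   WR (WR a g) f = WR a (C1 g f)"
  unfolding wr_def by (simp add: HC_assoc[symmetric] HC_I2 HC_cell HC_src)

lemma WR_WL[simp]: "f \<in> Hm \<Longrightarrow> g \<in> Hm \<Longrightarrow> a \<in> Cl \<Longrightarrow> S1 f = T1 (S2 a) \<Longrightarrow> S1 (S2 a) = T1 g \<Longrightarrow>
   WR (WL f a) g = WL f (WR a g)"
  unfolding wr_def wl_def by (simp add: HC_assoc[symmetric] HC_I2 HC_cell HC_src)

lemma WL_I1[simp]: "a \<in> Cl \<Longrightarrow> x = T1 (S2 a) \<Longrightarrow> WL (I1 x) a = a"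
  unfolding wl_def by (simp add: HC_unit)

lemma WR_I1[simp]: "a \<in> Cl \<Longrightarrow> x = S1 (S2 a) \<Longrightarrow> WR a (I1 x) = a"
  unfolding wr_def by (simp add: HC_unit)

lemma WL_I2[simp]: "f \<in> Hm \<Longrightarrow> g \<in> Hm \<Longrightarrow> S1 f = T1 g \<Longrightarrow> WL f (I2 g) = I2 (C1 f g)"
  unfolding wl_def by (simp add: HC_I2)

lemma WR_I2[simp]: "f \<in> Hm \<Longrightarrow> g \<in> Hm \<Longrightarrow> S1 g = T1 f \<Longrightarrow> WR (I2 g) f = I2 (C1 g f)"
  unfolding wr_def by (simp add: HC_I2)

lemma HC_expand[simp]: "a \<in> Cl \<Longrightarrow> b \<in> Cl \<Longrightarrow> S1 (S2 b) = T1 (S2 a) \<Longrightarrow>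
   HC b a = VC (WL (T2 b) a) (WR b (S2 a))"
proof -
  assume A: "a \<in> Cl" "b \<in> Cl" "S1 (S2 b) = T1 (S2 a)"
  have "HC b a = HC (VC (I2 (T2 b)) b) (VC a (I2 (S2 a)))" using A by simp
  also have "\<dots> = VC (HC (I2 (T2 b)) a) (HC b (I2 (S2 a)))"
    using A by (subst interchange) (simp_all add: cell_par)
  finally show ?thesis unfolding wl_def wr_def .
qed

lemma nat: "a \<in> Cl \<Longrightarrow> b \<in> Cl \<Longrightarrow> S1 (S2 b) = T1 (S2 a) \<Longrightarrow>
   VC (WL (T2 b) a) (WR b (S2 a)) = VC (WR b (T2 a)) (WL (S2 b) a)"
proof -
  assume A: "a \<in> Cl" "b \<in> Cl" "S1 (S2 b) = T1 (S2 a)"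
  have "HC b a = HC (VC b (I2 (S2 b))) (VC (I2 (T2 a)) a)" using A by simp
  also have "\<dots> = VC (HC b (I2 (T2 a))) (HC (I2 (S2 b)) a)"
    using A by (subst interchange) (simp_all add: cell_par)
  finally show ?thesis using HC_expand[OF A] unfolding wl_def wr_def by simp
qed

lemma ctx: "VC a b = VC c d \<Longrightarrow> x \<in> Cl \<Longrightarrow> a \<in> Cl \<Longrightarrow> b \<in> Cl \<Longrightarrow> c \<in> Cl \<Longrightarrow> d \<in> Cl \<Longrightarrow>
  S2 b = T2 x \<Longrightarrow> S2 a = T2 b \<Longrightarrow> S2 d = T2 x \<Longrightarrow> S2 c = T2 d \<Longrightarrow> VC a (VC b x) = VC c (VC d x)"
  by (metis VC_assoc)

lemma ctx1: "VC a b = c \<Longrightarrow> x \<in> Cl \<Longrightarrow> a \<in> Cl \<Longrightarrow> b \<in> Cl \<Longrightarrow>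
  S2 b = T2 x \<Longrightarrow> S2 a = T2 b \<Longrightarrow> VC a (VC b x) = VC c x"
  by (metis VC_assoc)

lemma ctx21: assumes e: "VC a (b) = e" and t: "x \<in> Cl" "a \<in> Cl" "b \<in> Cl" "e \<in> Cl" "S2 b = T2 x" "S2 a = T2 b" "S2 e = T2 x"
  shows "VC a (VC b (x)) = VC e (x)"
proof -
  have "VC (VC a (b)) x = VC (e) x" by (simp only: e)
  thus ?thesis using t by simp
qed

lemma ctx22: assumes e: "VC a (b) = VC e (f)" and t: "x \<in> Cl" "a \<in> Cl" "b \<in> Cl" "e \<in> Cl" "f \<in> Cl" "S2 b = T2 x" "S2 a = T2 b" "S2 f = T2 x" "S2 e = T2 f"
  shows "VC a (VC b (x)) = VC e (VC f (x))"
proof -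
  have "VC (VC a (b)) x = VC (VC e (f)) x" by (simp only: e)
  thus ?thesis using t by simp
qed

lemma ctx23: assumes e: "VC a (b) = VC e (VC f (g))" and t: "x \<in> Cl" "a \<in> Cl" "b \<in> Cl" "e \<in> Cl" "f \<in> Cl" "g \<in> Cl" "S2 b = T2 x" "S2 a = T2 b" "S2 g = T2 x" "S2 e = T2 f" "S2 f = T2 g"
  shows "VC a (VC b (x)) = VC e (VC f (VC g (x)))"
proof -
  have "VC (VC a (b)) x = VC (VC e (VC f (g))) x" by (simp only: e)
  thus ?thesis using t by simp
qed

lemma ctx24: assumes e: "VC a (b) = VC e (VC f (VC g (h)))" and t: "x \<in> Cl" "a \<in> Cl" "b \<in> Cl" "e \<in> Cl" "f \<in> Cl" "g \<in> Cl" "h \<in> Cl" "S2 b = T2 x" "S2 a = T2 b" "S2 h = T2 x" "S2 e = T2 f" "S2 f = T2 g" "S2 g = T2 h"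
  shows "VC a (VC b (x)) = VC e (VC f (VC g (VC h (x))))"
proof -
  have "VC (VC a (b)) x = VC (VC e (VC f (VC g (h)))) x" by (simp only: e)
  thus ?thesis using t by simp
qed

lemma ctx31: assumes e: "VC a (VC b (c)) = e" and t: "x \<in> Cl" "a \<in> Cl" "b \<in> Cl" "c \<in> Cl" "e \<in> Cl" "S2 c = T2 x" "S2 a = T2 b" "S2 b = T2 c" "S2 e = T2 x"
  shows "VC a (VC b (VC c (x))) = VC e (x)"
proof -
  have "VC (VC a (VC b (c))) x = VC (e) x" by (simp only: e)
  thus ?thesis using t by simp
qed

lemma ctx32: assumes e: "VC a (VC b (c)) = VC e (f)" and t: "x \<in> Cl" "a \<in> Cl" "b \<in> Cl" "c \<in> Cl" "e \<in> Cl" "f \<in> Cl" "S2 c = T2 x" "S2 a = T2 b" "S2 b = T2 c" "S2 f = T2 x" "S2 e = T2 f"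
  shows "VC a (VC b (VC c (x))) = VC e (VC f (x))"
proof -
  have "VC (VC a (VC b (c))) x = VC (VC e (f)) x" by (simp only: e)
  thus ?thesis using t by simp
qed

lemma ctx33: assumes e: "VC a (VC b (c)) = VC e (VC f (g))" and t: "x \<in> Cl" "a \<in> Cl" "b \<in> Cl" "c \<in> Cl" "e \<in> Cl" "f \<in> Cl" "g \<in> Cl" "S2 c = T2 x" "S2 a = T2 b" "S2 b = T2 c" "S2 g = T2 x" "S2 e = T2 f" "S2 f = T2 g"
  shows "VC a (VC b (VC c (x))) = VC e (VC f (VC g (x)))"
proof -
  have "VC (VC a (VC b (c))) x = VC (VC e (VC f (g))) x" by (simp only: e)
  thus ?thesis using t by simp
qed

lemma ctx34: assumes e: "VC a (VC b (c)) = VC e (VC f (VC g (h)))" and t: "x \<in> Cl" "a \<in> Cl" "b \<in> Cl" "c \<in> Cl" "e \<in> Cl" "f \<in> Cl" "g \<in> Cl" "h \<in> Cl" "S2 c = T2 x" "S2 a = T2 b" "S2 b = T2 c" "S2 h = T2 x" "S2 e = T2 f" "S2 f = T2 g" "S2 g = T2 h"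
  shows "VC a (VC b (VC c (x))) = VC e (VC f (VC g (VC h (x))))"
proof -
  have "VC (VC a (VC b (c))) x = VC (VC e (VC f (VC g (h)))) x" by (simp only: e)
  thus ?thesis using t by simp
qed

lemma ctx41: assumes e: "VC a (VC b (VC c (d))) = e" and t: "x \<in> Cl" "a \<in> Cl" "b \<in> Cl" "c \<in> Cl" "d \<in> Cl" "e \<in> Cl" "S2 d = T2 x" "S2 a = T2 b" "S2 b = T2 c" "S2 c = T2 d" "S2 e = T2 x"
  shows "VC a (VC b (VC c (VC d (x)))) = VC e (x)"
proof -
  have "VC (VC a (VC b (VC c (d)))) x = VC (e) x" by (simp only: e)
  thus ?thesis using t by simp
qed

lemma ctx42: assumes e: "VC a (VC b (VC c (d))) = VC e (f)" and t: "x \<in> Cl" "a \<in> Cl" "b \<in> Cl" "c \<in> Cl" "d \<in> Cl" "e \<in> Cl" "f \<in> Cl" "S2 d = T2 x" "S2 a = T2 b" "S2 b = T2 c" "S2 c = T2 d" "S2 f = T2 x" "S2 e = T2 f"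
  shows "VC a (VC b (VC c (VC d (x)))) = VC e (VC f (x))"
proof -
  have "VC (VC a (VC b (VC c (d)))) x = VC (VC e (f)) x" by (simp only: e)
  thus ?thesis using t by simp
qed

lemma ctx43: assumes e: "VC a (VC b (VC c (d))) = VC e (VC f (g))" and t: "x \<in> Cl" "a \<in> Cl" "b \<in> Cl" "c \<in> Cl" "d \<in> Cl" "e \<in> Cl" "f \<in> Cl" "g \<in> Cl" "S2 d = T2 x" "S2 a = T2 b" "S2 b = T2 c" "S2 c = T2 d" "S2 g = T2 x" "S2 e = T2 f" "S2 f = T2 g"
  shows "VC a (VC b (VC c (VC d (x)))) = VC e (VC f (VC g (x)))"
proof -
  have "VC (VC a (VC b (VC c (d)))) x = VC (VC e (VC f (g))) x" by (simp only: e)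
  thus ?thesis using t by simp
qed

lemma ctx44: assumes e: "VC a (VC b (VC c (d))) = VC e (VC f (VC g (h)))" and t: "x \<in> Cl" "a \<in> Cl" "b \<in> Cl" "c \<in> Cl" "d \<in> Cl" "e \<in> Cl" "f \<in> Cl" "g \<in> Cl" "h \<in> Cl" "S2 d = T2 x" "S2 a = T2 b" "S2 b = T2 c" "S2 c = T2 d" "S2 h = T2 x" "S2 e = T2 f" "S2 f = T2 g" "S2 g = T2 h"
  shows "VC a (VC b (VC c (VC d (x)))) = VC e (VC f (VC g (VC h (x))))"
proof -
  have "VC (VC a (VC b (VC c (d)))) x = VC (VC e (VC f (VC g (h)))) x" by (simp only: e)
  thus ?thesis using t by simp
qed

lemma ctx25: assumes e: "VC a (b) = VC e (VC f (VC g (VC h (u))))" and t: "x \<in> Cl" "a \<in> Cl" "b \<in> Cl" "e \<in> Cl" "f \<in> Cl" "g \<in> Cl" "h \<in> Cl" "u \<in> Cl" "S2 b = T2 x" "S2 a = T2 b" "S2 u = T2 x" "S2 e = T2 f" "S2 f = T2 g" "S2 g = T2 h" "S2 h = T2 u"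
  shows "VC a (VC b (x)) = VC e (VC f (VC g (VC h (VC u (x)))))"
proof -
  have "VC (VC a (b)) x = VC (VC e (VC f (VC g (VC h (u))))) x" by (simp only: e)
  thus ?thesis using t by simp
qed

lemma ctx26: assumes e: "VC a (b) = VC e (VC f (VC g (VC h (VC u (v)))))" and t: "x \<in> Cl" "a \<in> Cl" "b \<in> Cl" "e \<in> Cl" "f \<in> Cl" "g \<in> Cl" "h \<in> Cl" "u \<in> Cl" "v \<in> Cl" "S2 b = T2 x" "S2 a = T2 b" "S2 v = T2 x" "S2 e = T2 f" "S2 f = T2 g" "S2 g = T2 h" "S2 h = T2 u" "S2 u = T2 v"
  shows "VC a (VC b (x)) = VC e (VC f (VC g (VC h (VC u (VC v (x))))))"
proof -
  have "VC (VC a (b)) x = VC (VC e (VC f (VC g (VC h (VC u (v)))))) x" by (simp only: e)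
  thus ?thesis using t by simp
qed

lemma ctx35: assumes e: "VC a (VC b (c)) = VC e (VC f (VC g (VC h (u))))" and t: "x \<in> Cl" "a \<in> Cl" "b \<in> Cl" "c \<in> Cl" "e \<in> Cl" "f \<in> Cl" "g \<in> Cl" "h \<in> Cl" "u \<in> Cl" "S2 c = T2 x" "S2 a = T2 b" "S2 b = T2 c" "S2 u = T2 x" "S2 e = T2 f" "S2 f = T2 g" "S2 g = T2 h" "S2 h = T2 u"
  shows "VC a (VC b (VC c (x))) = VC e (VC f (VC g (VC h (VC u (x)))))"
proof -
  have "VC (VC a (VC b (c))) x = VC (VC e (VC f (VC g (VC h (u))))) x" by (simp only: e)
  thus ?thesis using t by simp
qed

lemma ctx36: assumes e: "VC a (VC b (c)) = VC e (VC f (VC g (VC h (VC u (v)))))" and t: "x \<in> Cl" "a \<in> Cl" "b \<in> Cl" "c \<in> Cl" "e \<in> Cl" "f \<in> Cl" "g \<in> Cl" "h \<in> Cl" "u \<in> Cl" "v \<in> Cl" "S2 c = T2 x" "S2 a = T2 b" "S2 b = T2 c" "S2 v = T2 x" "S2 e = T2 f" "S2 f = T2 g" "S2 g = T2 h" "S2 h = T2 u" "S2 u = T2 v"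
  shows "VC a (VC b (VC c (x))) = VC e (VC f (VC g (VC h (VC u (VC v (x))))))"
proof -
  have "VC (VC a (VC b (c))) x = VC (VC e (VC f (VC g (VC h (VC u (v)))))) x" by (simp only: e)
  thus ?thesis using t by simp
qed

lemma ctx45: assumes e: "VC a (VC b (VC c (d))) = VC e (VC f (VC g (VC h (u))))" and t: "x \<in> Cl" "a \<in> Cl" "b \<in> Cl" "c \<in> Cl" "d \<in> Cl" "e \<in> Cl" "f \<in> Cl" "g \<in> Cl" "h \<in> Cl" "u \<in> Cl" "S2 d = T2 x" "S2 a = T2 b" "S2 b = T2 c" "S2 c = T2 d" "S2 u = T2 x" "S2 e = T2 f" "S2 f = T2 g" "S2 g = T2 h" "S2 h = T2 u"
  shows "VC a (VC b (VC c (VC d (x)))) = VC e (VC f (VC g (VC h (VC u (x)))))"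
proof -
  have "VC (VC a (VC b (VC c (d)))) x = VC (VC e (VC f (VC g (VC h (u))))) x" by (simp only: e)
  thus ?thesis using t by simp
qed

lemma ctx46: assumes e: "VC a (VC b (VC c (d))) = VC e (VC f (VC g (VC h (VC u (v)))))" and t: "x \<in> Cl" "a \<in> Cl" "b \<in> Cl" "c \<in> Cl" "d \<in> Cl" "e \<in> Cl" "f \<in> Cl" "g \<in> Cl" "h \<in> Cl" "u \<in> Cl" "v \<in> Cl" "S2 d = T2 x" "S2 a = T2 b" "S2 b = T2 c" "S2 c = T2 d" "S2 v = T2 x" "S2 e = T2 f" "S2 f = T2 g" "S2 g = T2 h" "S2 h = T2 u" "S2 u = T2 v"
  shows "VC a (VC b (VC c (VC d (x)))) = VC e (VC f (VC g (VC h (VC u (VC v (x))))))"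
proof -
  have "VC (VC a (VC b (VC c (d)))) x = VC (VC e (VC f (VC g (VC h (VC u (v)))))) x" by (simp only: e)
  thus ?thesis using t by simp
qed

lemma ctx51: assumes e: "VC a (VC b (VC c (VC d (p)))) = e" and t: "x \<in> Cl" "a \<in> Cl" "b \<in> Cl" "c \<in> Cl" "d \<in> Cl" "p \<in> Cl" "e \<in> Cl" "S2 p = T2 x" "S2 a = T2 b" "S2 b = T2 c" "S2 c = T2 d" "S2 d = T2 p" "S2 e = T2 x"
  shows "VC a (VC b (VC c (VC d (VC p (x))))) = VC e (x)"
proof -
  have "VC (VC a (VC b (VC c (VC d (p))))) x = VC (e) x" by (simp only: e)
  thus ?thesis using t by simp
qed

lemma ctx52: assumes e: "VC a (VC b (VC c (VC d (p)))) = VC e (f)" and t: "x \<in> Cl" "a \<in> Cl" "b \<in> Cl" "c \<in> Cl" "d \<in> Cl" "p \<in> Cl" "e \<in> Cl" "f \<in> Cl" "S2 p = T2 x" "S2 a = T2 b" "S2 b = T2 c" "S2 c = T2 d" "S2 d = T2 p" "S2 f = T2 x" "S2 e = T2 f"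
  shows "VC a (VC b (VC c (VC d (VC p (x))))) = VC e (VC f (x))"
proof -
  have "VC (VC a (VC b (VC c (VC d (p))))) x = VC (VC e (f)) x" by (simp only: e)
  thus ?thesis using t by simp
qed

lemma ctx53: assumes e: "VC a (VC b (VC c (VC d (p)))) = VC e (VC f (g))" and t: "x \<in> Cl" "a \<in> Cl" "b \<in> Cl" "c \<in> Cl" "d \<in> Cl" "p \<in> Cl" "e \<in> Cl" "f \<in> Cl" "g \<in> Cl" "S2 p = T2 x" "S2 a = T2 b" "S2 b = T2 c" "S2 c = T2 d" "S2 d = T2 p" "S2 g = T2 x" "S2 e = T2 f" "S2 f = T2 g"
  shows "VC a (VC b (VC c (VC d (VC p (x))))) = VC e (VC f (VC g (x)))"
proof -
  have "VC (VC a (VC b (VC c (VC d (p))))) x = VC (VC e (VC f (g))) x" by (simp only: e)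
  thus ?thesis using t by simp
qed

lemma ctx54: assumes e: "VC a (VC b (VC c (VC d (p)))) = VC e (VC f (VC g (h)))" and t: "x \<in> Cl" "a \<in> Cl" "b \<in> Cl" "c \<in> Cl" "d \<in> Cl" "p \<in> Cl" "e \<in> Cl" "f \<in> Cl" "g \<in> Cl" "h \<in> Cl" "S2 p = T2 x" "S2 a = T2 b" "S2 b = T2 c" "S2 c = T2 d" "S2 d = T2 p" "S2 h = T2 x" "S2 e = T2 f" "S2 f = T2 g" "S2 g = T2 h"
  shows "VC a (VC b (VC c (VC d (VC p (x))))) = VC e (VC f (VC g (VC h (x))))"
proof -
  have "VC (VC a (VC b (VC c (VC d (p))))) x = VC (VC e (VC f (VC g (h)))) x" by (simp only: e)
  thus ?thesis using t by simp
qed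

lemma ctx55: assumes e: "VC a (VC b (VC c (VC d (p)))) = VC e (VC f (VC g (VC h (u))))" and t: "x \<in> Cl" "a \<in> Cl" "b \<in> Cl" "c \<in> Cl" "d \<in> Cl" "p \<in> Cl" "e \<in> Cl" "f \<in> Cl" "g \<in> Cl" "h \<in> Cl" "u \<in> Cl" "S2 p = T2 x" "S2 a = T2 b" "S2 b = T2 c" "S2 c = T2 d" "S2 d = T2 p" "S2 u = T2 x" "S2 e = T2 f" "S2 f = T2 g" "S2 g = T2 h" "S2 h = T2 u"
  shows "VC a (VC b (VC c (VC d (VC p (x))))) = VC e (VC f (VC g (VC h (VC u (x)))))"
proof -
  have "VC (VC a (VC b (VC c (VC d (p))))) x = VC (VC e (VC f (VC g (VC h (u))))) x" by (simp only: e)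
  thus ?thesis using t by simp
qed

lemma ctx56: assumes e: "VC a (VC b (VC c (VC d (p)))) = VC e (VC f (VC g (VC h (VC u (v)))))" and t: "x \<in> Cl" "a \<in> Cl" "b \<in> Cl" "c \<in> Cl" "d \<in> Cl" "p \<in> Cl" "e \<in> Cl" "f \<in> Cl" "g \<in> Cl" "h \<in> Cl" "u \<in> Cl" "v \<in> Cl" "S2 p = T2 x" "S2 a = T2 b" "S2 b = T2 c" "S2 c = T2 d" "S2 d = T2 p" "S2 v = T2 x" "S2 e = T2 f" "S2 f = T2 g" "S2 g = T2 h" "S2 h = T2 u" "S2 u = T2 v"
  shows "VC a (VC b (VC c (VC d (VC p (x))))) = VC e (VC f (VC g (VC h (VC u (VC v (x))))))"
proof -
  have "VC (VC a (VC b (VC c (VC d (p))))) x = VC (VC e (VC f (VC g (VC h (VC u (v)))))) x" by (simp only: e)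
  thus ?thesis using t by simp
qed

lemma ctx61: assumes e: "VC a (VC b (VC c (VC d (VC p (q))))) = e" and t: "x \<in> Cl" "a \<in> Cl" "b \<in> Cl" "c \<in> Cl" "d \<in> Cl" "p \<in> Cl" "q \<in> Cl" "e \<in> Cl" "S2 q = T2 x" "S2 a = T2 b" "S2 b = T2 c" "S2 c = T2 d" "S2 d = T2 p" "S2 p = T2 q" "S2 e = T2 x"
  shows "VC a (VC b (VC c (VC d (VC p (VC q (x)))))) = VC e (x)"
proof -
  have "VC (VC a (VC b (VC c (VC d (VC p (q)))))) x = VC (e) x" by (simp only: e)
  thus ?thesis using t by simp
qed

lemma ctx62: assumes e: "VC a (VC b (VC c (VC d (VC p (q))))) = VC e (f)" and t: "x \<in> Cl" "a \<in> Cl" "b \<in> Cl" "c \<in> Cl" "d \<in> Cl" "p \<in> Cl" "q \<in> Cl" "e \<in> Cl" "f \<in> Cl" "S2 q = T2 x" "S2 a = T2 b" "S2 b = T2 c" "S2 c = T2 d" "S2 d = T2 p" "S2 p = T2 q" "S2 f = T2 x" "S2 e = T2 f"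
  shows "VC a (VC b (VC c (VC d (VC p (VC q (x)))))) = VC e (VC f (x))"
proof -
  have "VC (VC a (VC b (VC c (VC d (VC p (q)))))) x = VC (VC e (f)) x" by (simp only: e)
  thus ?thesis using t by simp
qed

lemma ctx63: assumes e: "VC a (VC b (VC c (VC d (VC p (q))))) = VC e (VC f (g))" and t: "x \<in> Cl" "a \<in> Cl" "b \<in> Cl" "c \<in> Cl" "d \<in> Cl" "p \<in> Cl" "q \<in> Cl" "e \<in> Cl" "f \<in> Cl" "g \<in> Cl" "S2 q = T2 x" "S2 a = T2 b" "S2 b = T2 c" "S2 c = T2 d" "S2 d = T2 p" "S2 p = T2 q" "S2 g = T2 x" "S2 e = T2 f" "S2 f = T2 g"
  shows "VC a (VC b (VC c (VC d (VC p (VC q (x)))))) = VC e (VC f (VC g (x)))"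
proof -
  have "VC (VC a (VC b (VC c (VC d (VC p (q)))))) x = VC (VC e (VC f (g))) x" by (simp only: e)
  thus ?thesis using t by simp
qed

lemma ctx64: assumes e: "VC a (VC b (VC c (VC d (VC p (q))))) = VC e (VC f (VC g (h)))" and t: "x \<in> Cl" "a \<in> Cl" "b \<in> Cl" "c \<in> Cl" "d \<in> Cl" "p \<in> Cl" "q \<in> Cl" "e \<in> Cl" "f \<in> Cl" "g \<in> Cl" "h \<in> Cl" "S2 q = T2 x" "S2 a = T2 b" "S2 b = T2 c" "S2 c = T2 d" "S2 d = T2 p" "S2 p = T2 q" "S2 h = T2 x" "S2 e = T2 f" "S2 f = T2 g" "S2 g = T2 h"
  shows "VC a (VC b (VC c (VC d (VC p (VC q (x)))))) = VC e (VC f (VC g (VC h (x))))"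
proof -
  have "VC (VC a (VC b (VC c (VC d (VC p (q)))))) x = VC (VC e (VC f (VC g (h)))) x" by (simp only: e)
  thus ?thesis using t by simp
qed

lemma ctx65: assumes e: "VC a (VC b (VC c (VC d (VC p (q))))) = VC e (VC f (VC g (VC h (u))))" and t: "x \<in> Cl" "a \<in> Cl" "b \<in> Cl" "c \<in> Cl" "d \<in> Cl" "p \<in> Cl" "q \<in> Cl" "e \<in> Cl" "f \<in> Cl" "g \<in> Cl" "h \<in> Cl" "u \<in> Cl" "S2 q = T2 x" "S2 a = T2 b" "S2 b = T2 c" "S2 c = T2 d" "S2 d = T2 p" "S2 p = T2 q" "S2 u = T2 x" "S2 e = T2 f" "S2 f = T2 g" "S2 g = T2 h" "S2 h = T2 u"
  shows "VC a (VC b (VC c (VC d (VC p (VC q (x)))))) = VC e (VC f (VC g (VC h (VC u (x)))))"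
proof -
  have "VC (VC a (VC b (VC c (VC d (VC p (q)))))) x = VC (VC e (VC f (VC g (VC h (u))))) x" by (simp only: e)
  thus ?thesis using t by simp
qed

lemma ctx66: assumes e: "VC a (VC b (VC c (VC d (VC p (q))))) = VC e (VC f (VC g (VC h (VC u (v)))))" and t: "x \<in> Cl" "a \<in> Cl" "b \<in> Cl" "c \<in> Cl" "d \<in> Cl" "p \<in> Cl" "q \<in> Cl" "e \<in> Cl" "f \<in> Cl" "g \<in> Cl" "h \<in> Cl" "u \<in> Cl" "v \<in> Cl" "S2 q = T2 x" "S2 a = T2 b" "S2 b = T2 c" "S2 c = T2 d" "S2 d = T2 p" "S2 p = T2 q" "S2 v = T2 x" "S2 e = T2 f" "S2 f = T2 g" "S2 g = T2 h" "S2 h = T2 u" "S2 u = T2 v"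
  shows "VC a (VC b (VC c (VC d (VC p (VC q (x)))))) = VC e (VC f (VC g (VC h (VC u (VC v (x))))))"
proof -
  have "VC (VC a (VC b (VC c (VC d (VC p (q)))))) x = VC (VC e (VC f (VC g (VC h (VC u (v)))))) x" by (simp only: e)
  thus ?thesis using t by simp
qed

end


context tcat begin

definition mon where "mon k t \<mu> \<eta> \<longleftrightarrow> k \<in> Ob \<and> t \<in> Hm \<and> S1 t = k \<and> T1 t = k \<and>
   \<mu> \<in> Cl \<and> S2 \<mu> = C1 t t \<and> T2 \<mu> = t \<and> \<eta> \<in> Cl \<and> S2 \<eta> = I1 k \<and> T2 \<eta> = t"
definition monl where "monl t \<mu> \<eta> \<longleftrightarrow> VC \<mu> (WR \<mu> t) = VC \<mu> (WL t \<mu>) \<and>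
   VC \<mu> (WR \<eta> t) = I2 t \<and> VC \<mu> (WL t \<eta>) = I2 t"
definition m1 where "m1 k k' t t' V \<psi> \<longleftrightarrow> V \<in> Hm \<and> S1 V = k \<and> T1 V = k' \<and> \<psi> \<in> Cl \<and>
   S2 \<psi> = C1 t' V \<and> T2 \<psi> = C1 V t"
definition m1l where "m1l t \<mu> t' \<mu>' V \<psi> \<longleftrightarrow>
   VC (WL V \<mu>) (VC (WR \<psi> t) (WL t' \<psi>)) = VC \<psi> (WR \<mu>' V)"
definition c2 where "c2 V W \<omega> \<longleftrightarrow> \<omega> \<in> Cl \<and> S2 \<omega> = V \<and> T2 \<omega> = W"

lemma etaeta: assumes "mon k t \<mu> \<eta>" shows "VC (WL t \<eta>) \<eta> = VC (WR \<eta> t) \<eta>"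
proof -
  have [simp]: "k \<in> Ob" "t \<in> Hm" "S1 t = k" "T1 t = k" "\<eta> \<in> Cl" "S2 \<eta> = I1 k" "T2 \<eta> = t"
    using assms by (auto simp: mon_def)
  show ?thesis using nat[of \<eta> \<eta>] by simp
qed

lemma etaeta2: assumes "mon k t mu eta" "m1 k0 k t0 t V psi"
  shows "VC (WR eta (C1 t V)) (WR eta V) = VC (WL t (WR eta V)) (WR eta V)"
  using arg_cong[OF etaeta[OF assms(1)], of "\<lambda>x. WR x V"] assms by (simp add: mon_def m1_def)

lemma unitw: assumes "mon k t mu eta" "monl t mu eta" "m1 k0 k t0 t V psi"
  shows "VC (WR mu V) (WL t (WR eta V)) = I2 (C1 t V)" "VC (WR mu V) (WR eta (C1 t V)) = I2 (C1 t V)"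
  using arg_cong[OF assms(2)[unfolded monl_def, THEN conjunct2, THEN conjunct2], of "\<lambda>x. WR x V"]
    arg_cong[OF assms(2)[unfolded monl_def, THEN conjunct2, THEN conjunct1], of "\<lambda>x. WR x V"]
    assms by (simp_all add: mon_def m1_def)

lemma gp_c2:
  assumes M: "mon k t mu eta" "mon k' t' mu' eta'" and LW: "monl t mu eta" "monl t' mu' eta'"
   and V: "m1 k k' t t' V psi" and W: "m1 k k' t t' W phi" and WL: "m1l t mu t' mu' W phi"
   and om: "c2 V W om"
  shows "VC (WL W mu) (VC (WR phi t) (VC (WR (WR eta' W) t) (VC phi (VC (WR eta' W) om))))
       = VC phi (VC (WR eta' W) om)"
proof -
  note [simp] = M[unfolded mon_def] V[unfolded m1_def] W[unfolded m1_def] om[unfolded c2_def]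
  have s1: "VC (WR eta' (C1 W t)) phi = VC (WL t' phi) (WR eta' (C1 t' W))"
    using nat[of phi eta'] by simp
  note s2 = etaeta2[OF M(2) W]
  note s3 = WL[unfolded m1l_def]
  note s4 = unitw(1)[OF M(2) LW(2) W]
  have "VC (WL W mu) (VC (WR phi t) (VC (WR (WR eta' W) t) (VC phi (VC (WR eta' W) om))))
     = VC (WL W mu) (VC (WR phi t) (VC (WR eta' (C1 W t)) (VC phi (VC (WR eta' W) om))))" by simp
  also have "\<dots> = VC (WL W mu) (VC (WR phi t) (VC (WL t' phi) (VC (WR eta' (C1 t' W)) (VC (WR eta' W) om))))"
    by (simp add: ctx22[OF s1])
  also have "\<dots> = VC (WL W mu) (VC (WR phi t) (VC (WL t' phi) (VC (WL t' (WR eta' W)) (VC (WR eta' W) om))))"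
    by (simp add: ctx22[OF s2])
  also have "\<dots> = VC phi (VC (WR mu' W) (VC (WL t' (WR eta' W)) (VC (WR eta' W) om)))"
    by (simp add: ctx32[OF s3])
  also have "\<dots> = VC phi (VC (WR eta' W) om)"
    by (simp add: ctx21[OF s4])
  finally show ?thesis .
qed

lemma gp_c1:
  assumes M: "mon k t mu eta" "mon k' t' mu' eta'" and LW: "monl t mu eta" "monl t' mu' eta'"
   and V: "m1 k k' t t' V psi" and W: "m1 k k' t t' W phi" and WL: "m1l t mu t' mu' W phi"
   and om: "c2 V W om"
  shows "VC (WL W mu) (VC (WR phi t) (WL t' (VC phi (VC (WR eta' W) om)))) = VC phi (WL t' om)"
proof -
  note [simp] = M[unfolded mon_def] V[unfolded m1_def] W[unfolded m1_def] om[unfolded c2_def]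
  note s3 = WL[unfolded m1l_def]
  note s4 = unitw(1)[OF M(2) LW(2) W]
  have "VC (WL W mu) (VC (WR phi t) (WL t' (VC phi (VC (WR eta' W) om))))
     = VC (WL W mu) (VC (WR phi t) (VC (WL t' phi) (VC (WL t' (WR eta' W)) (WL t' om))))" by simp
  also have "\<dots> = VC phi (VC (WR mu' W) (VC (WL t' (WR eta' W)) (WL t' om)))"
    by (simp add: ctx32[OF s3])
  also have "\<dots> = VC phi (WL t' om)"
    by (simp add: ctx21[OF s4])
  finally show ?thesis .
qed


lemma gi_c1:
  assumes M: "mon k t mu eta" "mon k' t' mu' eta'" and LW: "monl t mu eta" "monl t' mu' eta'"
   and V: "m1 k k' t t' V psi" and VL: "m1l t mu t' mu' V psi" and W: "m1 k k' t t' W phi"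
   and om: "c2 V W om"
  shows "VC (WL W mu) (VC (WR (VC (WR om t) (VC psi (WR eta' V))) t) psi) = VC (WR om t) psi"
proof -
  note [simp] = M[unfolded mon_def] V[unfolded m1_def] W[unfolded m1_def] om[unfolded c2_def]
  have s1: "VC (WL W mu) (WR om (C1 t t)) = VC (WR om t) (WL V mu)" using nat[of mu om] by simp
  have s2: "VC (WR eta' (C1 V t)) psi = VC (WL t' psi) (WR eta' (C1 t' V))"
    using nat[of psi eta'] by simp
  note s3 = VL[unfolded m1l_def]
  note s4 = unitw(2)[OF M(2) LW(2) V]
  have "VC (WL W mu) (VC (WR (VC (WR om t) (VC psi (WR eta' V))) t) psi)
     = VC (WL W mu) (VC (WR om (C1 t t)) (VC (WR psi t) (VC (WR eta' (C1 V t)) psi)))" by simp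
  also have "\<dots> = VC (WR om t) (VC (WL V mu) (VC (WR psi t) (VC (WR eta' (C1 V t)) psi)))"
    by (simp add: ctx22[OF s1])
  also have "\<dots> = VC (WR om t) (VC (WL V mu) (VC (WR psi t) (VC (WL t' psi) (WR eta' (C1 t' V)))))"
    by (simp add: s2)
  also have "\<dots> = VC (WR om t) (VC psi (VC (WR mu' V) (WR eta' (C1 t' V))))"
    by (simp add: ctx32[OF s3])
  also have "\<dots> = VC (WR om t) psi"
    by (simp add: s4)
  finally show ?thesis .
qed

lemma em1_comp:
  assumes M: "mon k t mu eta" "mon k' t' mu' eta'" "mon k'' t'' mu'' eta''"
   and V: "m1 k k' t t' V psi" and VL: "m1l t mu t' mu' V psi"
   and V': "m1 k' k'' t' t'' V' psi'" and VL': "m1l t' mu' t'' mu'' V' psi'"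
  shows "m1l t mu t'' mu'' (C1 V' V) (VC (WL V' psi) (WR psi' V))"
proof -
  note [simp] = M[unfolded mon_def] V[unfolded m1_def] V'[unfolded m1_def]
  have s1: "VC (WR psi' (C1 V t)) (WL (C1 t'' V') psi) = VC (WL (C1 V' t') psi) (WR psi' (C1 t' V))"
    using nat[of psi psi'] by simp
  have s2: "VC (WL (C1 V' V) mu) (VC (WL V' (WR psi t)) (WL (C1 V' t') psi)) = VC (WL V' psi) (WL V' (WR mu' V))"
    using arg_cong[OF VL[unfolded m1l_def], of "WL V'"] by simp
  have s3: "VC (WL V' (WR mu' V)) (VC (WR psi' (C1 t' V)) (WL t'' (WR psi' V))) = VC (WR psi' V) (WR mu'' (C1 V' V))"
    using arg_cong[OF VL'[unfolded m1l_def], of "\<lambda>x. WR x V"] by simp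
  have "VC (WL (C1 V' V) mu) (VC (WR (VC (WL V' psi) (WR psi' V)) t) (WL t'' (VC (WL V' psi) (WR psi' V))))
     = VC (WL (C1 V' V) mu) (VC (WL V' (WR psi t)) (VC (WR psi' (C1 V t)) (VC (WL (C1 t'' V') psi) (WL t'' (WR psi' V)))))"
    by simp
  also have "\<dots> = VC (WL (C1 V' V) mu) (VC (WL V' (WR psi t)) (VC (WL (C1 V' t') psi) (VC (WR psi' (C1 t' V)) (WL t'' (WR psi' V)))))"
    by (simp add: ctx22[OF s1])
  also have "\<dots> = VC (WL V' psi) (VC (WL V' (WR mu' V)) (VC (WR psi' (C1 t' V)) (WL t'' (WR psi' V))))"
    by (simp add: ctx32[OF s2])
  also have "\<dots> = VC (WL V' psi) (VC (WR psi' V) (WR mu'' (C1 V' V)))"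
    by (simp add: s3)
  finally show ?thesis unfolding m1l_def by simp
qed

lemma em_vc_c1:
  assumes M: "mon k t mu eta" "mon k' t' mu' eta'" and LW: "monl t mu eta" "monl t' mu' eta'"
   and V: "m1 k k' t t' V psi" and W: "m1 k k' t t' W phi" and U: "m1 k k' t t' U th"
   and rho: "c2 V (C1 W t) rho" and tau: "c2 W (C1 U t) tau"
   and c1r: "VC (WL W mu) (VC (WR rho t) psi) = VC (WL W mu) (VC (WR phi t) (WL t' rho))"
   and c1t: "VC (WL U mu) (VC (WR tau t) phi) = VC (WL U mu) (VC (WR th t) (WL t' tau))"
  shows "VC (WL U mu) (VC (WR (VC (WL U mu) (VC (WR tau t) rho)) t) psi)
       = VC (WL U mu) (VC (WR th t) (WL t' (VC (WL U mu) (VC (WR tau t) rho))))"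
proof -
  note [simp] = M[unfolded mon_def] V[unfolded m1_def] W[unfolded m1_def] U[unfolded m1_def]
    rho[unfolded c2_def] tau[unfolded c2_def]
  have as: "VC (WL U mu) (WL U (WR mu t)) = VC (WL U mu) (WL (C1 U t) mu)"
    using arg_cong[OF LW(1)[unfolded monl_def, THEN conjunct1], of "WL U"] by simp
  have n1: "VC (WL (C1 U t) mu) (WR tau (C1 t t)) = VC (WR tau t) (WL W mu)"
    using nat[of mu tau] by simp
  have n2: "VC (WR th t) (WL (C1 t' U) mu) = VC (WL (C1 U t) mu) (WR th (C1 t t))"
    using nat[of mu th] by simp
  have c1tw: "VC (WL U (WR mu t)) (VC (WR th (C1 t t)) (WL t' (WR tau t))) = VC (WL U (WR mu t)) (VC (WR tau (C1 t t)) (WR phi t))"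
    using arg_cong[OF c1t, of "\<lambda>x. WR x t"] by simp
  have L: "VC (WL U mu) (VC (WR (VC (WL U mu) (VC (WR tau t) rho)) t) psi)
      = VC (WL U mu) (VC (WR tau t) (VC (WL W mu) (VC (WR phi t) (WL t' rho))))"
  proof -
    have "VC (WL U mu) (VC (WR (VC (WL U mu) (VC (WR tau t) rho)) t) psi)
       = VC (WL U mu) (VC (WL U (WR mu t)) (VC (WR tau (C1 t t)) (VC (WR rho t) psi)))" by simp
    also have "\<dots> = VC (WL U mu) (VC (WL (C1 U t) mu) (VC (WR tau (C1 t t)) (VC (WR rho t) psi)))"
      by (simp add: ctx22[OF as])
    also have "\<dots> = VC (WL U mu) (VC (WR tau t) (VC (WL W mu) (VC (WR rho t) psi)))"
      by (simp add: ctx22[OF n1])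
    also have "\<dots> = VC (WL U mu) (VC (WR tau t) (VC (WL W mu) (VC (WR phi t) (WL t' rho))))"
      by (simp add: c1r)
    finally show ?thesis .
  qed
  have "VC (WL U mu) (VC (WR th t) (WL t' (VC (WL U mu) (VC (WR tau t) rho))))
      = VC (WL U mu) (VC (WR th t) (VC (WL (C1 t' U) mu) (VC (WL t' (WR tau t)) (WL t' rho))))" by simp
  also have "\<dots> = VC (WL U mu) (VC (WL (C1 U t) mu) (VC (WR th (C1 t t)) (VC (WL t' (WR tau t)) (WL t' rho))))"
    by (simp add: ctx22[OF n2])
  also have "\<dots> = VC (WL U mu) (VC (WL U (WR mu t)) (VC (WR th (C1 t t)) (VC (WL t' (WR tau t)) (WL t' rho))))"
    by (simp add: ctx22[OF as[symmetric]])
  also have "\<dots> = VC (WL U mu) (VC (WL U (WR mu t)) (VC (WR tau (C1 t t)) (VC (WR phi t) (WL t' rho))))"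
    by (simp add: ctx33[OF c1tw])
  also have "\<dots> = VC (WL U mu) (VC (WL (C1 U t) mu) (VC (WR tau (C1 t t)) (VC (WR phi t) (WL t' rho))))"
    by (simp add: ctx22[OF as])
  also have "\<dots> = VC (WL U mu) (VC (WR tau t) (VC (WL W mu) (VC (WR phi t) (WL t' rho))))"
    by (simp add: ctx22[OF n1])
  finally show ?thesis using L by simp
qed

lemma lemX:
  assumes M: "mon k t \<mu> \<eta>" "mon k' t' \<mu>' \<eta>'" and LW: "monl t \<mu> \<eta>" "monl t' \<mu>' \<eta>'"
   and V: "m1 k k' t t' V \<psi>" and W: "m1 k k' t t' W \<phi>" and om: "c2 V W \<omega>"
   and I: "VC (WR \<omega> t) \<psi> = VC (WL W \<mu>) (VC (WR \<phi> t) (VC (WL t' (WR \<omega> t)) (VC (WL t' \<psi>) (WL t' (WR \<eta>' V)))))"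
  shows "VC (WL W \<mu>) (VC (WR \<phi> t) (VC (WR \<eta>' (C1 W t)) (VC (WR \<omega> t) (VC \<psi> (WR \<eta>' V)))))
       = VC (WR \<omega> t) (VC \<psi> (WR \<eta>' V))"
proof -
  note [simp] = M[unfolded mon_def] V[unfolded m1_def] W[unfolded m1_def] om[unfolded c2_def]
  have e1: "VC (WR \<eta>' (C1 W t)) (WR \<omega> t) = VC (WL t' (WR \<omega> t)) (WR \<eta>' (C1 V t))"
    using nat[of "WR \<omega> t" \<eta>'] by simp
  have e2: "VC (WR \<eta>' (C1 V t)) \<psi> = VC (WL t' \<psi>) (WR \<eta>' (C1 t' V))"
    using nat[of \<psi> \<eta>'] by simp
  note e3 = etaeta2[OF M(2) V]
  have "VC (WL W \<mu>) (VC (WR \<phi> t) (VC (WR \<eta>' (C1 W t)) (VC (WR \<omega> t) (VC \<psi> (WR \<eta>' V)))))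
      = VC (WL W \<mu>) (VC (WR \<phi> t) (VC (WL t' (WR \<omega> t)) (VC (WR \<eta>' (C1 V t)) (VC \<psi> (WR \<eta>' V)))))"
    by (simp add: ctx22[OF e1])
  also have "\<dots> = VC (WL W \<mu>) (VC (WR \<phi> t) (VC (WL t' (WR \<omega> t)) (VC (WL t' \<psi>) (VC (WR \<eta>' (C1 t' V)) (WR \<eta>' V)))))"
    by (simp add: ctx22[OF e2])
  also have "\<dots> = VC (WL W \<mu>) (VC (WR \<phi> t) (VC (WL t' (WR \<omega> t)) (VC (WL t' \<psi>) (VC (WL t' (WR \<eta>' V)) (WR \<eta>' V)))))"
    by (simp add: e3)
  also have "\<dots> = VC (WR \<omega> t) (VC \<psi> (WR \<eta>' V))"
    using arg_cong[OF I, of "\<lambda>x. VC x (WR \<eta>' V)"] by simp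
  finally show ?thesis .
qed

lemma gi_vc:
  assumes M: "mon k t mu eta" "mon k' t' mu' eta'" and LW: "monl t mu eta" "monl t' mu' eta'"
   and V: "m1 k k' t t' V psi" and W: "m1 k k' t t' W phi" and U: "m1 k k' t t' U th"
   and om: "c2 V W om" and om': "c2 W U om'"
   and I: "VC (WR om t) psi = VC (WL W mu) (VC (WR phi t) (VC (WL t' (WR om t)) (VC (WL t' psi) (WL t' (WR eta' V)))))"
  shows "VC (WR (VC om' om) t) (VC psi (WR eta' V))
     = VC (WL U mu) (VC (WR (VC (WR om' t) (VC phi (WR eta' W))) t) (VC (WR om t) (VC psi (WR eta' V))))"
proof -
  note [simp] = M[unfolded mon_def] V[unfolded m1_def] W[unfolded m1_def] U[unfolded m1_def]
    om[unfolded c2_def] om'[unfolded c2_def]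
  have X: "VC (WL W mu) (VC (WR phi t) (VC (WR eta' (C1 W t)) (VC (WR om t) (VC psi (WR eta' V)))))
       = VC (WR om t) (VC psi (WR eta' V))"
    by (rule lemX[OF M LW V W om I])
  have n1: "VC (WL U mu) (WR om' (C1 t t)) = VC (WR om' t) (WL W mu)" using nat[of mu om'] by simp
  have "VC (WL U mu) (VC (WR (VC (WR om' t) (VC phi (WR eta' W))) t) (VC (WR om t) (VC psi (WR eta' V))))
     = VC (WL U mu) (VC (WR om' (C1 t t)) (VC (WR phi t) (VC (WR eta' (C1 W t)) (VC (WR om t) (VC psi (WR eta' V))))))"
    by simp
  also have "\<dots> = VC (WR om' t) (VC (WL W mu) (VC (WR phi t) (VC (WR eta' (C1 W t)) (VC (WR om t) (VC psi (WR eta' V))))))"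
    by (simp add: ctx22[OF n1])
  also have "\<dots> = VC (WR om' t) (VC (WR om t) (VC psi (WR eta' V)))"
    by (simp only: X)
  finally show ?thesis by simp
qed


lemma gp_vc:
  assumes M: "mon k t mu eta" "mon k' t' mu' eta'" and LW: "monl t mu eta" "monl t' mu' eta'"
   and V: "m1 k k' t t' V psi" and W: "m1 k k' t t' W phi" and U: "m1 k k' t t' U th"
   and om: "c2 V W om" and om': "c2 W U om'"
   and P: "VC th (WL t' om') = VC (WL U mu) (VC (WR th t) (VC (WR (WR eta' U) t) (VC (WR om' t) phi)))"
  shows "VC th (VC (WR eta' U) (VC om' om))
     = VC (WL U mu) (VC (WR (VC th (VC (WR eta' U) om')) t) (VC phi (VC (WR eta' W) om)))"
proof -
  note [simp] = M[unfolded mon_def] V[unfolded m1_def] W[unfolded m1_def] U[unfolded m1_def]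
    om[unfolded c2_def] om'[unfolded c2_def]
  have P': "VC (WL U mu) (VC (WR th t) (VC (WR eta' (C1 U t)) (VC (WR om' t) phi))) = VC th (WL t' om')"
    using P by simp
  have n1: "VC (WL t' om') (WR eta' W) = VC (WR eta' U) om'" using nat[of om' eta'] by simp
  have "VC (WL U mu) (VC (WR (VC th (VC (WR eta' U) om')) t) (VC phi (VC (WR eta' W) om)))
      = VC (WL U mu) (VC (WR th t) (VC (WR eta' (C1 U t)) (VC (WR om' t) (VC phi (VC (WR eta' W) om)))))"
    by simp
  also have "\<dots> = VC th (VC (WL t' om') (VC (WR eta' W) om))"
    by (simp add: ctx52[OF P'])
  also have "\<dots> = VC th (VC (WR eta' U) (VC om' om))"
    by (simp add: ctx22[OF n1])
  finally show ?thesis by simp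
qed

lemma gi_hc:
  assumes M: "mon k t mu eta" "mon k' t' mu' eta'" "mon k'' t'' mu'' eta''"
   and LW: "monl t mu eta" "monl t' mu' eta'" "monl t'' mu'' eta''"
   and V: "m1 k k' t t' V psi" and VL: "m1l t mu t' mu' V psi" and W: "m1 k k' t t' W phi"
   and V': "m1 k' k'' t' t'' V' psi'" and W': "m1 k' k'' t' t'' W' phi'"
   and om: "c2 V W om" and om': "c2 V' W' om'"
  shows "VC (WR (HC om' om) t) (VC (VC (WL V' psi) (WR psi' V)) (WR eta'' (C1 V' V)))
   = VC (WL (C1 W' W) mu) (VC (WL W' (WR (VC (WR om t) (VC psi (WR eta' V))) t))
        (VC (WL W' psi) (WR (VC (WR om' t') (VC psi' (WR eta'' V'))) V)))"
proof -
  note [simp] = M[unfolded mon_def] V[unfolded m1_def] W[unfolded m1_def] V'[unfolded m1_def]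
    W'[unfolded m1_def] om[unfolded c2_def] om'[unfolded c2_def]
  have n1: "VC (WL W' psi) (WR om' (C1 t' V)) = VC (WR om' (C1 V t)) (WL V' psi)"
    using nat[of psi om'] by simp
  have n2: "VC (WL W' (WR eta' (C1 V t))) (WR om' (C1 V t)) = VC (WR om' (C1 t' (C1 V t))) (WL V' (WR eta' (C1 V t)))"
    using nat[of "WR eta' (C1 V t)" om'] by simp
  have n3: "VC (WL W' (WR psi t)) (WR om' (C1 t' (C1 V t))) = VC (WR om' (C1 V (C1 t t))) (WL V' (WR psi t))"
    using nat[of "WR psi t" om'] by simp
  have n4: "VC (WL W' (WR om (C1 t t))) (WR om' (C1 V (C1 t t))) = VC (WR om' (C1 W (C1 t t))) (WL V' (WR om (C1 t t)))"
    using nat[of "WR om (C1 t t)" om'] by simp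
  have n5: "VC (WL (C1 W' W) mu) (WR om' (C1 W (C1 t t))) = VC (WR om' (C1 W t)) (WL (C1 V' W) mu)"
    using nat[of "WL W mu" om'] by simp
  have g: "VC (WL (C1 V' W) mu) (VC (WL V' (WR om (C1 t t))) (VC (WL V' (WR psi t)) (VC (WL V' (WR eta' (C1 V t))) (WL V' psi))))
     = VC (WL V' (WR om t)) (WL V' psi)"
    using arg_cong[OF gi_c1[OF M(1,2) LW(1,2) V VL W om], of "WL V'"] by simp
  have n7: "VC (WR om' (C1 W t)) (WL V' (WR om t)) = VC (WL W' (WR om t)) (WR om' (C1 V t))"
    using nat[of "WR om t" om'] by simp
  have "VC (WL (C1 W' W) mu) (VC (WL W' (WR (VC (WR om t) (VC psi (WR eta' V))) t))
        (VC (WL W' psi) (WR (VC (WR om' t') (VC psi' (WR eta'' V'))) V)))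
   = VC (WL (C1 W' W) mu) (VC (WL W' (WR om (C1 t t))) (VC (WL W' (WR psi t)) (VC (WL W' (WR eta' (C1 V t))) (VC (WL W' psi) (VC (WR om' (C1 t' V)) (VC (WR psi' V) (WR eta'' (C1 V' V))))))))"
    by simp
  also have "\<dots> = VC (WL (C1 W' W) mu) (VC (WL W' (WR om (C1 t t))) (VC (WL W' (WR psi t)) (VC (WL W' (WR eta' (C1 V t))) (VC (WR om' (C1 V t)) (VC (WL V' psi) (VC (WR psi' V) (WR eta'' (C1 V' V))))))))"
    by (simp add: ctx22[OF n1])
  also have "\<dots> = VC (WL (C1 W' W) mu) (VC (WL W' (WR om (C1 t t))) (VC (WL W' (WR psi t)) (VC (WR om' (C1 t' (C1 V t))) (VC (WL V' (WR eta' (C1 V t))) (VC (WL V' psi) (VC (WR psi' V) (WR eta'' (C1 V' V))))))))"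
    by (simp add: ctx22[OF n2])
  also have "\<dots> = VC (WL (C1 W' W) mu) (VC (WL W' (WR om (C1 t t))) (VC (WR om' (C1 V (C1 t t))) (VC (WL V' (WR psi t)) (VC (WL V' (WR eta' (C1 V t))) (VC (WL V' psi) (VC (WR psi' V) (WR eta'' (C1 V' V))))))))"
    by (simp add: ctx22[OF n3])
  also have "\<dots> = VC (WL (C1 W' W) mu) (VC (WR om' (C1 W (C1 t t))) (VC (WL V' (WR om (C1 t t))) (VC (WL V' (WR psi t)) (VC (WL V' (WR eta' (C1 V t))) (VC (WL V' psi) (VC (WR psi' V) (WR eta'' (C1 V' V))))))))"
    by (simp add: ctx22[OF n4])
  also have "\<dots> = VC (WR om' (C1 W t)) (VC (WL (C1 V' W) mu) (VC (WL V' (WR om (C1 t t))) (VC (WL V' (WR psi t)) (VC (WL V' (WR eta' (C1 V t))) (VC (WL V' psi) (VC (WR psi' V) (WR eta'' (C1 V' V))))))))"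
    by (simp add: ctx22[OF n5])
  also have "\<dots> = VC (WR om' (C1 W t)) (VC (WL V' (WR om t)) (VC (WL V' psi) (VC (WR psi' V) (WR eta'' (C1 V' V)))))"
    by (simp add: ctx52[OF g])
  also have "\<dots> = VC (WL W' (WR om t)) (VC (WR om' (C1 V t)) (VC (WL V' psi) (VC (WR psi' V) (WR eta'' (C1 V' V)))))"
    by (simp add: ctx22[OF n7])
  finally show ?thesis by simp
qed

lemma gp_hc:
  assumes M: "mon k t mu eta" "mon k' t' mu' eta'" "mon k'' t'' mu'' eta''"
   and V: "m1 k k' t t' V psi" and W: "m1 k k' t t' W phi"
   and V': "m1 k' k'' t' t'' V' psi'" and W': "m1 k' k'' t' t'' W' phi'"
   and om: "c2 V W om" and om': "c2 V' W' om'"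
   and P: "VC phi (WL t' om) = VC (WL W mu) (VC (WR phi t) (VC (WR (WR eta' W) t) (VC (WR om t) psi)))"
  shows "VC (VC (WL W' phi) (WR phi' W)) (VC (WR eta'' (C1 W' W)) (HC om' om))
   = VC (WL (C1 W' W) mu) (VC (WL W' (WR (VC phi (VC (WR eta' W) om)) t))
        (VC (WL W' psi) (WR (VC phi' (VC (WR eta'' W') om')) V)))"
proof -
  note [simp] = M[unfolded mon_def] V[unfolded m1_def] W[unfolded m1_def] V'[unfolded m1_def]
    W'[unfolded m1_def] om[unfolded c2_def] om'[unfolded c2_def]
  have PW: "VC (WL (C1 W' W) mu) (VC (WL W' (WR phi t)) (VC (WL W' (WR eta' (C1 W t))) (VC (WL W' (WR om t)) (WL W' psi))))
     = VC (WL W' phi) (WL (C1 W' t') om)"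
    using arg_cong[OF P, of "WL W'"] by simp
  have n1: "VC (WL (C1 W' t') om) (WR phi' V) = VC (WR phi' W) (WL (C1 t'' W') om)"
    using nat[of om phi'] by simp
  have n2: "VC (WL (C1 t'' W') om) (WR eta'' (C1 W' V)) = VC (WR eta'' (C1 W' W)) (WL W' om)"
    using nat[of "WL W' om" eta''] by simp
  have "VC (WL (C1 W' W) mu) (VC (WL W' (WR (VC phi (VC (WR eta' W) om)) t))
        (VC (WL W' psi) (WR (VC phi' (VC (WR eta'' W') om')) V)))
     = VC (WL (C1 W' W) mu) (VC (WL W' (WR phi t)) (VC (WL W' (WR eta' (C1 W t))) (VC (WL W' (WR om t)) (VC (WL W' psi) (VC (WR phi' V) (VC (WR eta'' (C1 W' V)) (WR om' V)))))))"
    by simp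
  also have "\<dots> = VC (WL W' phi) (VC (WL (C1 W' t') om) (VC (WR phi' V) (VC (WR eta'' (C1 W' V)) (WR om' V))))"
    by (simp add: ctx52[OF PW])
  also have "\<dots> = VC (WL W' phi) (VC (WR phi' W) (VC (WL (C1 t'' W') om) (VC (WR eta'' (C1 W' V)) (WR om' V))))"
    by (simp add: ctx22[OF n1])
  also have "\<dots> = VC (WL W' phi) (VC (WR phi' W) (VC (WR eta'' (C1 W' W)) (VC (WL W' om) (WR om' V))))"
    by (simp add: ctx22[OF n2])
  finally show ?thesis by simp
qed


lemma em_hc_c1:
  assumes M: "mon k t mu eta" "mon k' t' mu' eta'" "mon k'' t'' mu'' eta''"
   and LW: "monl t mu eta" "monl t' mu' eta'" "monl t'' mu'' eta''"
   and V: "m1 k k' t t' V psi" and VL: "m1l t mu t' mu' V psi" and W: "m1 k k' t t' W phi"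
   and V': "m1 k' k'' t' t'' V' psi'" and W': "m1 k' k'' t' t'' W' phi'"
   and rho: "c2 V (C1 W t) rho" and rho': "c2 V' (C1 W' t') rho'"
   and c1r: "VC (WL W mu) (VC (WR rho t) psi) = VC (WL W mu) (VC (WR phi t) (WL t' rho))"
   and c1r': "VC (WL W' mu') (VC (WR rho' t') psi') = VC (WL W' mu') (VC (WR phi' t') (WL t'' rho'))"
  shows "VC (WL (C1 W' W) mu) (VC (WR (VC (WL (C1 W' W) mu) (VC (WL W' (WR rho t)) (VC (WL W' psi) (WR rho' V)))) t)
            (VC (WL V' psi) (WR psi' V)))
       = VC (WL (C1 W' W) mu) (VC (WR (VC (WL W' phi) (WR phi' W)) t)
            (WL t'' (VC (WL (C1 W' W) mu) (VC (WL W' (WR rho t)) (VC (WL W' psi) (WR rho' V))))))"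
proof -
  note [simp] = M[unfolded mon_def] V[unfolded m1_def] W[unfolded m1_def] V'[unfolded m1_def]
    W'[unfolded m1_def] rho[unfolded c2_def] rho'[unfolded c2_def]
  have a: "VC (WR rho' (C1 V t)) (WL V' psi) = VC (WL (C1 W' t') psi) (WR rho' (C1 t' V))"
    using nat[of psi rho'] by simp
  have as: "VC (WL (C1 W' W) mu) (WL (C1 W' W) (WR mu t)) = VC (WL (C1 W' W) mu) (WL (C1 W' (C1 W t)) mu)"
    using arg_cong[OF LW(1)[unfolded monl_def, THEN conjunct1], of "WL (C1 W' W)"] by simp
  have nb: "VC (WL (C1 W' (C1 W t)) mu) (WL W' (WR rho (C1 t t))) = VC (WL W' (WR rho t)) (WL (C1 W' V) mu)"
    using arg_cong[OF nat[of mu rho], of "WL W'"] by simp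
  have cc: "VC (WL (C1 W' V) mu) (VC (WL W' (WR psi t)) (WL (C1 W' t') psi)) = VC (WL W' psi) (WL W' (WR mu' V))"
    using arg_cong[OF VL[unfolded m1l_def], of "WL W'"] by simp
  have d: "VC (WL W' (WR mu' V)) (VC (WR rho' (C1 t' V)) (WR psi' V)) = VC (WL W' (WR mu' V)) (VC (WR phi' (C1 t' V)) (WL t'' (WR rho' V)))"
    using arg_cong[OF c1r', of "\<lambda>x. WR x V"] by simp
  have e1: "VC (WR phi' (C1 W t)) (WL (C1 t'' (C1 W' W)) mu) = VC (WL (C1 W' (C1 t' W)) mu) (WR phi' (C1 W (C1 t t)))"
    using nat[of "WL W mu" phi'] by simp
  have e2: "VC (WR phi' (C1 W (C1 t t))) (WL (C1 t'' W') (WR rho t)) = VC (WL (C1 W' t') (WR rho t)) (WR phi' (C1 V t))"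
    using nat[of "WR rho t" phi'] by simp
  have e3: "VC (WR phi' (C1 V t)) (WL (C1 t'' W') psi) = VC (WL (C1 W' t') psi) (WR phi' (C1 t' V))"
    using nat[of psi phi'] by simp
  have e4: "VC (WL W' (WR phi t)) (WL (C1 W' (C1 t' W)) mu) = VC (WL (C1 W' (C1 W t)) mu) (WL W' (WR phi (C1 t t)))"
    using arg_cong[OF nat[of mu phi], of "WL W'"] by simp
  have e6: "VC (WL (C1 W' W) (WR mu t)) (VC (WL W' (WR phi (C1 t t))) (WL (C1 W' t') (WR rho t)))
      = VC (WL (C1 W' W) (WR mu t)) (VC (WL W' (WR rho (C1 t t))) (WL W' (WR psi t)))"
    using arg_cong[OF c1r[symmetric], of "\<lambda>x. WL W' (WR x t)"] by simp
  have L: "VC (WL (C1 W' W) mu) (VC (WR (VC (WL (C1 W' W) mu) (VC (WL W' (WR rho t)) (VC (WL W' psi) (WR rho' V)))) t)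
            (VC (WL V' psi) (WR psi' V)))
     = VC (WL (C1 W' W) mu) (VC (WL W' (WR rho t)) (VC (WL W' psi) (VC (WL W' (WR mu' V)) (VC (WR phi' (C1 t' V)) (WL t'' (WR rho' V))))))"
  proof -
    have "VC (WL (C1 W' W) mu) (VC (WR (VC (WL (C1 W' W) mu) (VC (WL W' (WR rho t)) (VC (WL W' psi) (WR rho' V)))) t)
            (VC (WL V' psi) (WR psi' V)))
      = VC (WL (C1 W' W) mu) (VC (WL (C1 W' W) (WR mu t)) (VC (WL W' (WR rho (C1 t t))) (VC (WL W' (WR psi t)) (VC (WR rho' (C1 V t)) (VC (WL V' psi) (WR psi' V))))))"
      by simp
    also have "\<dots> = VC (WL (C1 W' W) mu) (VC (WL (C1 W' W) (WR mu t)) (VC (WL W' (WR rho (C1 t t))) (VC (WL W' (WR psi t)) (VC (WL (C1 W' t') psi) (VC (WR rho' (C1 t' V)) (WR psi' V))))))"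
      by (simp add: ctx22[OF a])
    also have "\<dots> = VC (WL (C1 W' W) mu) (VC (WL (C1 W' (C1 W t)) mu) (VC (WL W' (WR rho (C1 t t))) (VC (WL W' (WR psi t)) (VC (WL (C1 W' t') psi) (VC (WR rho' (C1 t' V)) (WR psi' V))))))"
      by (simp add: ctx22[OF as])
    also have "\<dots> = VC (WL (C1 W' W) mu) (VC (WL W' (WR rho t)) (VC (WL (C1 W' V) mu) (VC (WL W' (WR psi t)) (VC (WL (C1 W' t') psi) (VC (WR rho' (C1 t' V)) (WR psi' V))))))"
      by (simp add: ctx22[OF nb])
    also have "\<dots> = VC (WL (C1 W' W) mu) (VC (WL W' (WR rho t)) (VC (WL W' psi) (VC (WL W' (WR mu' V)) (VC (WR rho' (C1 t' V)) (WR psi' V)))))"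
      by (simp add: ctx32[OF cc])
    also have "\<dots> = VC (WL (C1 W' W) mu) (VC (WL W' (WR rho t)) (VC (WL W' psi) (VC (WL W' (WR mu' V)) (VC (WR phi' (C1 t' V)) (WL t'' (WR rho' V))))))"
      by (simp add: d)
    finally show ?thesis .
  qed
  have "VC (WL (C1 W' W) mu) (VC (WR (VC (WL W' phi) (WR phi' W)) t)
            (WL t'' (VC (WL (C1 W' W) mu) (VC (WL W' (WR rho t)) (VC (WL W' psi) (WR rho' V))))))
    = VC (WL (C1 W' W) mu) (VC (WL W' (WR phi t)) (VC (WR phi' (C1 W t)) (VC (WL (C1 t'' (C1 W' W)) mu) (VC (WL (C1 t'' W') (WR rho t)) (VC (WL (C1 t'' W') psi) (WL t'' (WR rho' V)))))))"
    by simp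
  also have "\<dots> = VC (WL (C1 W' W) mu) (VC (WL W' (WR phi t)) (VC (WL (C1 W' (C1 t' W)) mu) (VC (WR phi' (C1 W (C1 t t))) (VC (WL (C1 t'' W') (WR rho t)) (VC (WL (C1 t'' W') psi) (WL t'' (WR rho' V)))))))"
    by (simp add: ctx22[OF e1])
  also have "\<dots> = VC (WL (C1 W' W) mu) (VC (WL W' (WR phi t)) (VC (WL (C1 W' (C1 t' W)) mu) (VC (WL (C1 W' t') (WR rho t)) (VC (WR phi' (C1 V t)) (VC (WL (C1 t'' W') psi) (WL t'' (WR rho' V)))))))"
    by (simp add: ctx22[OF e2])
  also have "\<dots> = VC (WL (C1 W' W) mu) (VC (WL W' (WR phi t)) (VC (WL (C1 W' (C1 t' W)) mu) (VC (WL (C1 W' t') (WR rho t)) (VC (WL (C1 W' t') psi) (VC (WR phi' (C1 t' V)) (WL t'' (WR rho' V)))))))"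
    by (simp add: ctx22[OF e3])
  also have "\<dots> = VC (WL (C1 W' W) mu) (VC (WL (C1 W' (C1 W t)) mu) (VC (WL W' (WR phi (C1 t t))) (VC (WL (C1 W' t') (WR rho t)) (VC (WL (C1 W' t') psi) (VC (WR phi' (C1 t' V)) (WL t'' (WR rho' V)))))))"
    by (simp add: ctx22[OF e4])
  also have "\<dots> = VC (WL (C1 W' W) mu) (VC (WL (C1 W' W) (WR mu t)) (VC (WL W' (WR phi (C1 t t))) (VC (WL (C1 W' t') (WR rho t)) (VC (WL (C1 W' t') psi) (VC (WR phi' (C1 t' V)) (WL t'' (WR rho' V)))))))"
    by (simp add: ctx22[OF as[symmetric]])
  also have "\<dots> = VC (WL (C1 W' W) mu) (VC (WL (C1 W' W) (WR mu t)) (VC (WL W' (WR rho (C1 t t))) (VC (WL W' (WR psi t)) (VC (WL (C1 W' t') psi) (VC (WR phi' (C1 t' V)) (WL t'' (WR rho' V)))))))"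
    by (simp add: ctx33[OF e6])
  also have "\<dots> = VC (WL (C1 W' W) mu) (VC (WL (C1 W' (C1 W t)) mu) (VC (WL W' (WR rho (C1 t t))) (VC (WL W' (WR psi t)) (VC (WL (C1 W' t') psi) (VC (WR phi' (C1 t' V)) (WL t'' (WR rho' V)))))))"
    by (simp add: ctx22[OF as])
  also have "\<dots> = VC (WL (C1 W' W) mu) (VC (WL W' (WR rho t)) (VC (WL (C1 W' V) mu) (VC (WL W' (WR psi t)) (VC (WL (C1 W' t') psi) (VC (WR phi' (C1 t' V)) (WL t'' (WR rho' V)))))))"
    by (simp add: ctx22[OF nb])
  also have "\<dots> = VC (WL (C1 W' W) mu) (VC (WL W' (WR rho t)) (VC (WL W' psi) (VC (WL W' (WR mu' V)) (VC (WR phi' (C1 t' V)) (WL t'' (WR rho' V))))))"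
    by (simp add: ctx32[OF cc])
  finally show ?thesis using L by simp
qed



lemma c1_to_iota:
  assumes M: "mon k t mu eta" "mon k' t' mu' eta'" and LW: "monl t mu eta" "monl t' mu' eta'"
   and V: "m1 k k' t t' V psi" and VL: "m1l t mu t' mu' V psi" and W: "m1 k k' t t' W phi"
   and om: "c2 V W om"
   and c: "VC (WL W mu) (VC (WR (VC (WR om t) (VC psi (WR eta' V))) t) psi)
         = VC (WL W mu) (VC (WR phi t) (WL t' (VC (WR om t) (VC psi (WR eta' V)))))"
  shows "VC (WR om t) psi = VC (WL W mu) (VC (WR phi t) (VC (WL t' (WR om t)) (VC (WL t' psi) (WL t' (WR eta' V)))))"
proof -
  note [simp] = M[unfolded mon_def] V[unfolded m1_def] W[unfolded m1_def] om[unfolded c2_def]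
  note g = gi_c1[OF M LW V VL W om]
  have "VC (WR om t) psi = VC (WL W mu) (VC (WR (VC (WR om t) (VC psi (WR eta' V))) t) psi)"
    by (simp only: g)
  also have "\<dots> = VC (WL W mu) (VC (WR phi t) (WL t' (VC (WR om t) (VC psi (WR eta' V)))))" by (rule c)
  also have "\<dots> = VC (WL W mu) (VC (WR phi t) (VC (WL t' (WR om t)) (VC (WL t' psi) (WL t' (WR eta' V)))))"
    by simp
  finally show ?thesis .
qed

lemma iota_to_c1:
  assumes M: "mon k t mu eta" "mon k' t' mu' eta'" and LW: "monl t mu eta" "monl t' mu' eta'"
   and V: "m1 k k' t t' V psi" and VL: "m1l t mu t' mu' V psi" and W: "m1 k k' t t' W phi"
   and om: "c2 V W om"
   and I: "VC (WR om t) psi = VC (WL W mu) (VC (WR phi t) (VC (WL t' (WR om t)) (VC (WL t' psi) (WL t' (WR eta' V)))))"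
  shows "VC (WL W mu) (VC (WR (VC (WR om t) (VC psi (WR eta' V))) t) psi)
         = VC (WL W mu) (VC (WR phi t) (WL t' (VC (WR om t) (VC psi (WR eta' V)))))"
proof -
  note [simp] = M[unfolded mon_def] V[unfolded m1_def] W[unfolded m1_def] om[unfolded c2_def]
  note g = gi_c1[OF M LW V VL W om]
  have "VC (WL W mu) (VC (WR (VC (WR om t) (VC psi (WR eta' V))) t) psi) = VC (WR om t) psi"
    by (simp only: g)
  also have "\<dots> = VC (WL W mu) (VC (WR phi t) (VC (WL t' (WR om t)) (VC (WL t' psi) (WL t' (WR eta' V)))))"
    by (rule I)
  also have "\<dots> = VC (WL W mu) (VC (WR phi t) (WL t' (VC (WR om t) (VC psi (WR eta' V)))))"
    by simp
  finally show ?thesis .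
qed

lemma c1_to_pi:
  assumes M: "mon k t mu eta" "mon k' t' mu' eta'" and LW: "monl t mu eta" "monl t' mu' eta'"
   and V: "m1 k k' t t' V psi" and W: "m1 k k' t t' W phi" and WL: "m1l t mu t' mu' W phi"
   and om: "c2 V W om"
   and c: "VC (WL W mu) (VC (WR (VC phi (VC (WR eta' W) om)) t) psi)
         = VC (WL W mu) (VC (WR phi t) (WL t' (VC phi (VC (WR eta' W) om))))"
  shows "VC phi (WL t' om) = VC (WL W mu) (VC (WR phi t) (VC (WR (WR eta' W) t) (VC (WR om t) psi)))"
proof -
  note [simp] = M[unfolded mon_def] V[unfolded m1_def] W[unfolded m1_def] om[unfolded c2_def]
  note g = gp_c1[OF M LW V W WL om]
  have "VC phi (WL t' om) = VC (WL W mu) (VC (WR phi t) (WL t' (VC phi (VC (WR eta' W) om))))"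
    by (simp only: g)
  also have "\<dots> = VC (WL W mu) (VC (WR (VC phi (VC (WR eta' W) om)) t) psi)" by (rule c[symmetric])
  also have "\<dots> = VC (WL W mu) (VC (WR phi t) (VC (WR (WR eta' W) t) (VC (WR om t) psi)))"
    by simp
  finally show ?thesis .
qed

lemma pi_to_c1:
  assumes M: "mon k t mu eta" "mon k' t' mu' eta'" and LW: "monl t mu eta" "monl t' mu' eta'"
   and V: "m1 k k' t t' V psi" and W: "m1 k k' t t' W phi" and WL: "m1l t mu t' mu' W phi"
   and om: "c2 V W om"
   and P: "VC phi (WL t' om) = VC (WL W mu) (VC (WR phi t) (VC (WR (WR eta' W) t) (VC (WR om t) psi)))"
  shows "VC (WL W mu) (VC (WR (VC phi (VC (WR eta' W) om)) t) psi)
         = VC (WL W mu) (VC (WR phi t) (WL t' (VC phi (VC (WR eta' W) om))))"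
proof -
  note [simp] = M[unfolded mon_def] V[unfolded m1_def] W[unfolded m1_def] om[unfolded c2_def]
  note g = gp_c1[OF M LW V W WL om]
  have "VC (WL W mu) (VC (WR (VC phi (VC (WR eta' W) om)) t) psi)
      = VC (WL W mu) (VC (WR phi t) (VC (WR (WR eta' W) t) (VC (WR om t) psi)))" by simp
  also have "\<dots> = VC phi (WL t' om)" by (rule P[symmetric])
  also have "\<dots> = VC (WL W mu) (VC (WR phi t) (WL t' (VC phi (VC (WR eta' W) om))))"
    by (simp only: g)
  finally show ?thesis .
qed

lemma iota_id:
  assumes M: "mon k t mu eta" "mon k' t' mu' eta'" and LW: "monl t mu eta" "monl t' mu' eta'"
   and V: "m1 k k' t t' V psi" and VL: "m1l t mu t' mu' V psi"
  shows "VC (WR (I2 V) t) psi = VC (WL V mu) (VC (WR psi t) (VC (WL t' (WR (I2 V) t)) (VC (WL t' psi) (WL t' (WR eta' V)))))"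
proof -
  note [simp] = M[unfolded mon_def] V[unfolded m1_def]
  have "c2 V V (I2 V)" by (simp add: c2_def)
  note g = gp_c1[OF M LW V V VL this]
  show ?thesis using g by simp
qed

lemma pi_id:
  assumes M: "mon k t mu eta" "mon k' t' mu' eta'" and LW: "monl t mu eta" "monl t' mu' eta'"
   and V: "m1 k k' t t' V psi" and VL: "m1l t mu t' mu' V psi"
  shows "VC psi (WL t' (I2 V)) = VC (WL V mu) (VC (WR psi t) (VC (WR (WR eta' V) t) (VC (WR (I2 V) t) psi)))"
proof -
  note [simp] = M[unfolded mon_def] V[unfolded m1_def]
  have "c2 V V (I2 V)" by (simp add: c2_def)
  note g = gi_c1[OF M LW V VL V this]
  show ?thesis using g by simp
qed

lemma iota_vc:
  assumes M: "mon k t mu eta" "mon k' t' mu' eta'" and LW: "monl t mu eta" "monl t' mu' eta'"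
   and V: "m1 k k' t t' V psi" and VL: "m1l t mu t' mu' V psi"
   and W: "m1 k k' t t' W phi" and WL: "m1l t mu t' mu' W phi"
   and U: "m1 k k' t t' U th" and UL: "m1l t mu t' mu' U th"
   and om: "c2 V W om" and om': "c2 W U om'"
   and I: "VC (WR om t) psi = VC (WL W mu) (VC (WR phi t) (VC (WL t' (WR om t)) (VC (WL t' psi) (WL t' (WR eta' V)))))"
   and I': "VC (WR om' t) phi = VC (WL U mu) (VC (WR th t) (VC (WL t' (WR om' t)) (VC (WL t' phi) (WL t' (WR eta' W)))))"
  shows "VC (WR (VC om' om) t) psi = VC (WL U mu) (VC (WR th t) (VC (WL t' (WR (VC om' om) t)) (VC (WL t' psi) (WL t' (WR eta' V)))))"
proof -
  note [simp] = M[unfolded mon_def] V[unfolded m1_def] W[unfolded m1_def] U[unfolded m1_def]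
    om[unfolded c2_def] om'[unfolded c2_def]
  note c1 = iota_to_c1[OF M LW V VL W om I]
  note c1' = iota_to_c1[OF M LW W WL U om' I']
  have r: "c2 V (C1 W t) (VC (WR om t) (VC psi (WR eta' V)))" by (simp add: c2_def)
  have r': "c2 W (C1 U t) (VC (WR om' t) (VC phi (WR eta' W)))" by (simp add: c2_def)
  note E = em_vc_c1[OF M LW V W U r r' c1 c1']
  note Gv = gi_vc[OF M LW V W U om om' I]
  have c: "VC (WL U mu) (VC (WR (VC (WR (VC om' om) t) (VC psi (WR eta' V))) t) psi)
         = VC (WL U mu) (VC (WR th t) (WL t' (VC (WR (VC om' om) t) (VC psi (WR eta' V)))))"
    unfolding Gv by (rule E)
  have oo: "c2 V U (VC om' om)" by (simp add: c2_def)
  show ?thesis by (rule c1_to_iota[OF M LW V VL U oo c])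
qed

lemma pi_vc:
  assumes M: "mon k t mu eta" "mon k' t' mu' eta'" and LW: "monl t mu eta" "monl t' mu' eta'"
   and V: "m1 k k' t t' V psi" and VL: "m1l t mu t' mu' V psi"
   and W: "m1 k k' t t' W phi" and WL: "m1l t mu t' mu' W phi"
   and U: "m1 k k' t t' U th" and UL: "m1l t mu t' mu' U th"
   and om: "c2 V W om" and om': "c2 W U om'"
   and P: "VC phi (WL t' om) = VC (WL W mu) (VC (WR phi t) (VC (WR (WR eta' W) t) (VC (WR om t) psi)))"
   and P': "VC th (WL t' om') = VC (WL U mu) (VC (WR th t) (VC (WR (WR eta' U) t) (VC (WR om' t) phi)))"
  shows "VC th (WL t' (VC om' om)) = VC (WL U mu) (VC (WR th t) (VC (WR (WR eta' U) t) (VC (WR (VC om' om) t) psi)))"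
proof -
  note [simp] = M[unfolded mon_def] V[unfolded m1_def] W[unfolded m1_def] U[unfolded m1_def]
    om[unfolded c2_def] om'[unfolded c2_def]
  note c1 = pi_to_c1[OF M LW V W WL om P]
  note c1' = pi_to_c1[OF M LW W U UL om' P']
  have r: "c2 V (C1 W t) (VC phi (VC (WR eta' W) om))" by (simp add: c2_def)
  have r': "c2 W (C1 U t) (VC th (VC (WR eta' U) om'))" by (simp add: c2_def)
  note E = em_vc_c1[OF M LW V W U r r' c1 c1']
  note Gv = gp_vc[OF M LW V W U om om' P']
  have c: "VC (WL U mu) (VC (WR (VC th (VC (WR eta' U) (VC om' om))) t) psi)
         = VC (WL U mu) (VC (WR th t) (WL t' (VC th (VC (WR eta' U) (VC om' om)))))"
    unfolding Gv by (rule E)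
  have oo: "c2 V U (VC om' om)" by (simp add: c2_def)
  show ?thesis by (rule c1_to_pi[OF M LW V U UL oo c])
qed


lemma m1_comp:
  assumes M: "mon k t mu eta" "mon k' t' mu' eta'" "mon k'' t'' mu'' eta''"
   and V: "m1 k k' t t' V psi" and V': "m1 k' k'' t' t'' V' psi'"
  shows "m1 k k'' t t'' (C1 V' V) (VC (WL V' psi) (WR psi' V))"
  using assms unfolding mon_def m1_def by simp

lemma iota_hc:
  assumes M: "mon k t mu eta" "mon k' t' mu' eta'" "mon k'' t'' mu'' eta''"
   and LW: "monl t mu eta" "monl t' mu' eta'" "monl t'' mu'' eta''"
   and V: "m1 k k' t t' V psi" and VL: "m1l t mu t' mu' V psi"
   and W: "m1 k k' t t' W phi" and WL: "m1l t mu t' mu' W phi"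
   and V': "m1 k' k'' t' t'' V' psi'" and VL': "m1l t' mu' t'' mu'' V' psi'"
   and W': "m1 k' k'' t' t'' W' phi'" and WL': "m1l t' mu' t'' mu'' W' phi'"
   and om: "c2 V W om" and om': "c2 V' W' om'"
   and I: "VC (WR om t) psi = VC (WL W mu) (VC (WR phi t) (VC (WL t' (WR om t)) (VC (WL t' psi) (WL t' (WR eta' V)))))"
   and I': "VC (WR om' t') psi' = VC (WL W' mu') (VC (WR phi' t') (VC (WL t'' (WR om' t')) (VC (WL t'' psi') (WL t'' (WR eta'' V')))))"
  shows "VC (WR (HC om' om) t) (VC (WL V' psi) (WR psi' V))
    = VC (WL (C1 W' W) mu) (VC (WR (VC (WL W' phi) (WR phi' W)) t) (VC (WL t'' (WR (HC om' om) t))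
        (VC (WL t'' (VC (WL V' psi) (WR psi' V))) (WL t'' (WR eta'' (C1 V' V))))))"
proof -
  note [simp] = M[unfolded mon_def] V[unfolded m1_def] W[unfolded m1_def] V'[unfolded m1_def]
    W'[unfolded m1_def] om[unfolded c2_def] om'[unfolded c2_def]
  note c1 = iota_to_c1[OF M(1,2) LW(1,2) V VL W om I]
  note c1' = iota_to_c1[OF M(2,3) LW(2,3) V' VL' W' om' I']
  have r: "c2 V (C1 W t) (VC (WR om t) (VC psi (WR eta' V)))" by (simp add: c2_def)
  have r': "c2 V' (C1 W' t') (VC (WR om' t') (VC psi' (WR eta'' V')))" by (simp add: c2_def)
  note E = em_hc_c1[OF M LW V VL W V' W' r r' c1 c1']
  note Gh = gi_hc[OF M LW V VL W V' W' om om']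
  have c: "VC (WL (C1 W' W) mu) (VC (WR (VC (WR (HC om' om) t) (VC (VC (WL V' psi) (WR psi' V)) (WR eta'' (C1 V' V)))) t) (VC (WL V' psi) (WR psi' V)))
         = VC (WL (C1 W' W) mu) (VC (WR (VC (WL W' phi) (WR phi' W)) t) (WL t'' (VC (WR (HC om' om) t) (VC (VC (WL V' psi) (WR psi' V)) (WR eta'' (C1 V' V))))))"
    unfolding Gh by (rule E)
  have oo: "c2 (C1 V' V) (C1 W' W) (HC om' om)" by (simp add: c2_def)
  note Vc = m1_comp[OF M V V'] and Wc = m1_comp[OF M W W']
  note VcL = em1_comp[OF M V VL V' VL']
  show ?thesis by (rule c1_to_iota[OF M(1,3) LW(1,3) Vc VcL Wc oo c])
qed

lemma pi_hc:
  assumes M: "mon k t mu eta" "mon k' t' mu' eta'" "mon k'' t'' mu'' eta''"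
   and LW: "monl t mu eta" "monl t' mu' eta'" "monl t'' mu'' eta''"
   and V: "m1 k k' t t' V psi" and VL: "m1l t mu t' mu' V psi"
   and W: "m1 k k' t t' W phi" and WL: "m1l t mu t' mu' W phi"
   and V': "m1 k' k'' t' t'' V' psi'" and VL': "m1l t' mu' t'' mu'' V' psi'"
   and W': "m1 k' k'' t' t'' W' phi'" and WL': "m1l t' mu' t'' mu'' W' phi'"
   and om: "c2 V W om" and om': "c2 V' W' om'"
   and P: "VC phi (WL t' om) = VC (WL W mu) (VC (WR phi t) (VC (WR (WR eta' W) t) (VC (WR om t) psi)))"
   and P': "VC phi' (WL t'' om') = VC (WL W' mu') (VC (WR phi' t') (VC (WR (WR eta'' W') t') (VC (WR om' t') psi')))"
  shows "VC (VC (WL W' phi) (WR phi' W)) (WL t'' (HC om' om))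
    = VC (WL (C1 W' W) mu) (VC (WR (VC (WL W' phi) (WR phi' W)) t) (VC (WR (WR eta'' (C1 W' W)) t)
        (VC (WR (HC om' om) t) (VC (WL V' psi) (WR psi' V)))))"
proof -
  note [simp] = M[unfolded mon_def] V[unfolded m1_def] W[unfolded m1_def] V'[unfolded m1_def]
    W'[unfolded m1_def] om[unfolded c2_def] om'[unfolded c2_def]
  note c1 = pi_to_c1[OF M(1,2) LW(1,2) V W WL om P]
  note c1' = pi_to_c1[OF M(2,3) LW(2,3) V' W' WL' om' P']
  have r: "c2 V (C1 W t) (VC phi (VC (WR eta' W) om))" by (simp add: c2_def)
  have r': "c2 V' (C1 W' t') (VC phi' (VC (WR eta'' W') om'))" by (simp add: c2_def)
  note E = em_hc_c1[OF M LW V VL W V' W' r r' c1 c1']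
  note Gh = gp_hc[OF M V W V' W' om om' P]
  have c: "VC (WL (C1 W' W) mu) (VC (WR (VC (VC (WL W' phi) (WR phi' W)) (VC (WR eta'' (C1 W' W)) (HC om' om))) t) (VC (WL V' psi) (WR psi' V)))
         = VC (WL (C1 W' W) mu) (VC (WR (VC (WL W' phi) (WR phi' W)) t) (WL t'' (VC (VC (WL W' phi) (WR phi' W)) (VC (WR eta'' (C1 W' W)) (HC om' om)))))"
    unfolding Gh by (rule E)
  have oo: "c2 (C1 V' V) (C1 W' W) (HC om' om)" by (simp add: c2_def)
  note Vc = m1_comp[OF M V V'] and Wc = m1_comp[OF M W W']
  note WcL = em1_comp[OF M W WL W' WL']
  show ?thesis by (rule c1_to_pi[OF M(1,3) LW(1,3) Vc Wc WcL oo c])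
qed

end


context tcat begin

lemma monad_iff: "is_monad K m \<longleftrightarrow> mon (mobj m) (mfun m) (mmult m) (munit m) \<and> monl (mfun m) (mmult m) (munit m)"
  by (simp add: is_monad_def mon_def monl_def Let_def conj_ac)

lemma em1_iff: "is_em1 K f \<longleftrightarrow> is_monad K (msrc f) \<and> is_monad K (mtgt f) \<and>
   m1 (mobj (msrc f)) (mobj (mtgt f)) (mfun (msrc f)) (mfun (mtgt f)) (mV f) (mpsi f) \<and>
   m1l (mfun (msrc f)) (mmult (msrc f)) (mfun (mtgt f)) (mmult (mtgt f)) (mV f) (mpsi f)"
  by (simp add: is_em1_def m1_def m1l_def Let_def conj_ac)

lemma em1_id: assumes "is_monad K m" shows "is_em1 K (m_id1 K m)"
proof -
  have A: "mon (mobj m) (mfun m) (mmult m) (munit m)" "monl (mfun m) (mmult m) (munit m)"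
    using assms monad_iff by auto
  note [simp] = A(1)[unfolded mon_def]
  show ?thesis unfolding em1_iff m_id1_def using assms by (simp add: m1_def m1l_def)
qed

lemma em1_comp_rec: assumes "is_em1 K f" "is_em1 K g" "msrc g = mtgt f"
  shows "is_em1 K (m_comp1 K g f)"
proof -
  from assms have F: "is_monad K (msrc f)" "is_monad K (mtgt f)" "is_monad K (mtgt g)"
    "m1 (mobj (msrc f)) (mobj (mtgt f)) (mfun (msrc f)) (mfun (mtgt f)) (mV f) (mpsi f)"
    "m1l (mfun (msrc f)) (mmult (msrc f)) (mfun (mtgt f)) (mmult (mtgt f)) (mV f) (mpsi f)"
    "m1 (mobj (mtgt f)) (mobj (mtgt g)) (mfun (mtgt f)) (mfun (mtgt g)) (mV g) (mpsi g)"
    "m1l (mfun (mtgt f)) (mmult (mtgt f)) (mfun (mtgt g)) (mmult (mtgt g)) (mV g) (mpsi g)"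
    unfolding em1_iff by auto
  have M: "mon (mobj (msrc f)) (mfun (msrc f)) (mmult (msrc f)) (munit (msrc f))"
     "mon (mobj (mtgt f)) (mfun (mtgt f)) (mmult (mtgt f)) (munit (mtgt f))"
     "mon (mobj (mtgt g)) (mfun (mtgt g)) (mmult (mtgt g)) (munit (mtgt g))"
    using F(1-3) monad_iff by auto
  show ?thesis unfolding em1_iff m_comp1_def
    using F(1,3) m1_comp[OF M F(4) F(6)] em1_comp[OF M F(4,5,6,7)] by simp
qed

lemma comp_idL: assumes "is_em1 K f" shows "m_comp1 K (m_id1 K (mtgt f)) f = f"
proof -
  have "m1 (mobj (msrc f)) (mobj (mtgt f)) (mfun (msrc f)) (mfun (mtgt f)) (mV f) (mpsi f)"
    "is_monad K (mtgt f)" using assms em1_iff by auto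
  hence [simp]: "mV f \<in> Hm" "S1 (mV f) = mobj (msrc f)" "T1 (mV f) = mobj (mtgt f)" "mpsi f \<in> Cl"
    "S2 (mpsi f) = C1 (mfun (mtgt f)) (mV f)" "T2 (mpsi f) = C1 (mV f) (mfun (msrc f))"
    "mobj (mtgt f) \<in> Ob" "mfun (mtgt f) \<in> Hm" "S1 (mfun (mtgt f)) = mobj (mtgt f)" "T1 (mfun (mtgt f)) = mobj (mtgt f)"
    by (auto simp: m1_def monad_iff mon_def)
  show ?thesis unfolding m_comp1_def m_id1_def by (intro mmor.equality) simp_all
qed

lemma comp_idR: assumes "is_em1 K f" shows "m_comp1 K f (m_id1 K (msrc f)) = f"
proof -
  have "m1 (mobj (msrc f)) (mobj (mtgt f)) (mfun (msrc f)) (mfun (mtgt f)) (mV f) (mpsi f)"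
    "is_monad K (msrc f)" "is_monad K (mtgt f)" using assms em1_iff by auto
  hence [simp]: "mV f \<in> Hm" "S1 (mV f) = mobj (msrc f)" "T1 (mV f) = mobj (mtgt f)" "mpsi f \<in> Cl"
    "S2 (mpsi f) = C1 (mfun (mtgt f)) (mV f)" "T2 (mpsi f) = C1 (mV f) (mfun (msrc f))"
    "mobj (msrc f) \<in> Ob" "mfun (msrc f) \<in> Hm" "S1 (mfun (msrc f)) = mobj (msrc f)" "T1 (mfun (msrc f)) = mobj (msrc f)"
    "mobj (mtgt f) \<in> Ob" "mfun (mtgt f) \<in> Hm" "S1 (mfun (mtgt f)) = mobj (mtgt f)" "T1 (mfun (mtgt f)) = mobj (mtgt f)"
    by (auto simp: m1_def monad_iff mon_def)
  show ?thesis unfolding m_comp1_def m_id1_def by (intro mmor.equality) simp_all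
qed

lemma m1D: "m1 k k' t t' V psi \<Longrightarrow> V \<in> Hm \<and> S1 V = k \<and> T1 V = k' \<and> psi \<in> Cl \<and> S2 psi = C1 t' V \<and> T2 psi = C1 V t"
  by (simp add: m1_def)

lemma comp_assoc: assumes "is_em1 K f" "is_em1 K g" "is_em1 K h" "msrc g = mtgt f" "msrc h = mtgt g"
  shows "m_comp1 K h (m_comp1 K g f) = m_comp1 K (m_comp1 K h g) f"
proof -
  from assms have F: "is_monad K (msrc f)" "is_monad K (mtgt f)" "is_monad K (mtgt g)" "is_monad K (mtgt h)"
    "m1 (mobj (msrc f)) (mobj (mtgt f)) (mfun (msrc f)) (mfun (mtgt f)) (mV f) (mpsi f)"
    "m1 (mobj (mtgt f)) (mobj (mtgt g)) (mfun (mtgt f)) (mfun (mtgt g)) (mV g) (mpsi g)"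
    "m1 (mobj (mtgt g)) (mobj (mtgt h)) (mfun (mtgt g)) (mfun (mtgt h)) (mV h) (mpsi h)"
    unfolding em1_iff by auto
  note [simp] = F(1-4)[unfolded monad_iff mon_def] F(5-7)[THEN m1D]
  show ?thesis unfolding m_comp1_def by (intro mmor.equality) simp_all
qed


lemma m_id1_sel[simp]: "msrc (m_id1 K m) = m" "mtgt (m_id1 K m) = m" "mV (m_id1 K m) = I1 (mobj m)"
  "mpsi (m_id1 K m) = I2 (mfun m)" by (simp_all add: m_id1_def)

lemma m_comp1_sel[simp]: "msrc (m_comp1 K g f) = msrc f" "mtgt (m_comp1 K g f) = mtgt g"
  "mV (m_comp1 K g f) = C1 (mV g) (mV f)" by (simp_all add: m_comp1_def)

lemma em1_V: "is_em1 K f \<Longrightarrow> mV f \<in> Hm \<and> S1 (mV f) = mobj (msrc f) \<and> T1 (mV f) = mobj (mtgt f)"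
  by (simp add: em1_iff m1_def)

lemma em1_V_simp[simp]: "is_em1 K f \<Longrightarrow> mV f \<in> Hm" "is_em1 K f \<Longrightarrow> S1 (mV f) = mobj (msrc f)"
  "is_em1 K f \<Longrightarrow> T1 (mV f) = mobj (mtgt f)"
  by (simp_all add: em1_V)

lemma mnd_cells: "c \<in> tc_cell (mnd_cat K P) \<longleftrightarrow> is_em1 K (csrc c) \<and> is_em1 K (ctgt c) \<and>
   msrc (ctgt c) = msrc (csrc c) \<and> mtgt (ctgt c) = mtgt (csrc c) \<and> cval c \<in> Cl \<and>
   S2 (cval c) = mV (csrc c) \<and> T2 (cval c) = mV (ctgt c) \<and> P c"
  by (auto simp: mnd_cat_def parallel_mcell_def)

lemma mnd_sel[simp]: "tc_ob (mnd_cat K P) = {m. is_monad K m}" "tc_hom (mnd_cat K P) = {f. is_em1 K f}"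
  "tc_src1 (mnd_cat K P) = msrc" "tc_tgt1 (mnd_cat K P) = mtgt"
  "tc_src2 (mnd_cat K P) = csrc" "tc_tgt2 (mnd_cat K P) = ctgt" "tc_id1 (mnd_cat K P) = m_id1 K"
  "tc_id2 (mnd_cat K P) = (\<lambda>f. \<lparr>csrc = f, ctgt = f, cval = I2 (mV f)\<rparr>)"
  "tc_comp1 (mnd_cat K P) = m_comp1 K"
  "tc_hcomp (mnd_cat K P) = (\<lambda>c' c. \<lparr>csrc = m_comp1 K (csrc c') (csrc c), ctgt = m_comp1 K (ctgt c') (ctgt c),
                         cval = HC (cval c') (cval c)\<rparr>)"
  "tc_vcomp (mnd_cat K P) = (\<lambda>d c. \<lparr>csrc = csrc c, ctgt = ctgt d, cval = VC (cval d) (cval c)\<rparr>)"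
  by (simp_all add: mnd_cat_def)

lemma mnd_cat_2cat:
  assumes Pid: "\<And>f. is_em1 K f \<Longrightarrow> P \<lparr>csrc = f, ctgt = f, cval = I2 (mV f)\<rparr>"
  and Pvc: "\<And>c d. c \<in> tc_cell (mnd_cat K P) \<Longrightarrow> d \<in> tc_cell (mnd_cat K P) \<Longrightarrow> csrc d = ctgt c \<Longrightarrow>
     P \<lparr>csrc = csrc c, ctgt = ctgt d, cval = VC (cval d) (cval c)\<rparr>"
  and Phc: "\<And>c d. c \<in> tc_cell (mnd_cat K P) \<Longrightarrow> d \<in> tc_cell (mnd_cat K P) \<Longrightarrow> msrc (csrc d) = mtgt (csrc c) \<Longrightarrow>
     P \<lparr>csrc = m_comp1 K (csrc d) (csrc c), ctgt = m_comp1 K (ctgt d) (ctgt c), cval = HC (cval d) (cval c)\<rparr>"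
  shows "two_category (mnd_cat K P)"
  unfolding two_category_def
  apply (intro conjI)
  subgoal by (simp add: mnd_cat_def em1_id)
  subgoal by (simp add: mnd_cat_def em1_iff)
  subgoal by (simp add: mnd_cat_def em1_comp_rec)
  subgoal by (simp add: mnd_cat_def comp_idL comp_idR)
  subgoal by (simp add: mnd_cat_def comp_assoc)
  subgoal by (simp add: mnd_cat_def parallel_mcell_def)
  subgoal using Pid by (simp add: mnd_cells)
  subgoal
  proof (intro ballI impI)
    fix a b assume a: "a \<in> tc_cell (mnd_cat K P)" and b: "b \<in> tc_cell (mnd_cat K P)"
      and s: "tc_src2 (mnd_cat K P) b = tc_tgt2 (mnd_cat K P) a"
    from a b s have F: "is_em1 K (csrc a)" "is_em1 K (ctgt a)" "msrc (ctgt a) = msrc (csrc a)"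
      "mtgt (ctgt a) = mtgt (csrc a)" "cval a \<in> Cl" "S2 (cval a) = mV (csrc a)" "T2 (cval a) = mV (ctgt a)"
      "is_em1 K (ctgt b)" "msrc (ctgt b) = msrc (ctgt a)"
      "mtgt (ctgt b) = mtgt (ctgt a)" "cval b \<in> Cl" "S2 (cval b) = mV (ctgt a)" "T2 (cval b) = mV (ctgt b)"
      "csrc b = ctgt a"
      by (simp_all add: mnd_cells)
    have P: "P \<lparr>csrc = csrc a, ctgt = ctgt b, cval = VC (cval b) (cval a)\<rparr>"
      using Pvc[OF a b F(14)] .
    show "tc_vcomp (mnd_cat K P) b a \<in> tc_cell (mnd_cat K P) \<and>
        tc_src2 (mnd_cat K P) (tc_vcomp (mnd_cat K P) b a) = tc_src2 (mnd_cat K P) a \<and>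
        tc_tgt2 (mnd_cat K P) (tc_vcomp (mnd_cat K P) b a) = tc_tgt2 (mnd_cat K P) b"
      using P F by (simp add: mnd_cells)
  qed
  subgoal
  proof (intro ballI)
    fix a assume a: "a \<in> tc_cell (mnd_cat K P)"
    hence F: "cval a \<in> Cl" "S2 (cval a) = mV (csrc a)" "T2 (cval a) = mV (ctgt a)"
      by (simp_all add: mnd_cells)
    show "tc_vcomp (mnd_cat K P) (tc_id2 (mnd_cat K P) (tc_tgt2 (mnd_cat K P) a)) a = a \<and>
        tc_vcomp (mnd_cat K P) a (tc_id2 (mnd_cat K P) (tc_src2 (mnd_cat K P) a)) = a"
      using F by (simp add: mcell.equality)
  qed
  subgoal
  proof (intro ballI impI)
    fix a b c assume a: "a \<in> tc_cell (mnd_cat K P)" and b: "b \<in> tc_cell (mnd_cat K P)"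
      and c: "c \<in> tc_cell (mnd_cat K P)"
      and s: "tc_src2 (mnd_cat K P) b = tc_tgt2 (mnd_cat K P) a" "tc_src2 (mnd_cat K P) c = tc_tgt2 (mnd_cat K P) b"
    from a b c s have F: "cval a \<in> Cl" "S2 (cval a) = mV (csrc a)" "T2 (cval a) = mV (ctgt a)"
      "cval b \<in> Cl" "S2 (cval b) = mV (ctgt a)" "T2 (cval b) = mV (ctgt b)"
      "cval c \<in> Cl" "S2 (cval c) = mV (ctgt b)" "T2 (cval c) = mV (ctgt c)"
      by (simp_all add: mnd_cells)
    show "tc_vcomp (mnd_cat K P) c (tc_vcomp (mnd_cat K P) b a) = tc_vcomp (mnd_cat K P) (tc_vcomp (mnd_cat K P) c b) a"
      using F by simp
  qed
  subgoal
  proof (intro ballI impI)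
    fix a b assume a: "a \<in> tc_cell (mnd_cat K P)" and b: "b \<in> tc_cell (mnd_cat K P)"
      and s: "tc_src1 (mnd_cat K P) (tc_src2 (mnd_cat K P) b) = tc_tgt1 (mnd_cat K P) (tc_src2 (mnd_cat K P) a)"
    from a b s have F: "is_em1 K (csrc a)" "is_em1 K (ctgt a)" "msrc (ctgt a) = msrc (csrc a)"
      "mtgt (ctgt a) = mtgt (csrc a)" "cval a \<in> Cl" "S2 (cval a) = mV (csrc a)" "T2 (cval a) = mV (ctgt a)"
      "is_em1 K (csrc b)" "is_em1 K (ctgt b)" "msrc (ctgt b) = msrc (csrc b)"
      "mtgt (ctgt b) = mtgt (csrc b)" "cval b \<in> Cl" "S2 (cval b) = mV (csrc b)" "T2 (cval b) = mV (ctgt b)"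
      "msrc (csrc b) = mtgt (csrc a)"
      by (simp_all add: mnd_cells)
    note [simp] = F
    have P: "P \<lparr>csrc = m_comp1 K (csrc b) (csrc a), ctgt = m_comp1 K (ctgt b) (ctgt a), cval = HC (cval b) (cval a)\<rparr>"
      using Phc[OF a b F(15)] .
    have H: "HC (cval b) (cval a) \<in> Cl" "S2 (HC (cval b) (cval a)) = C1 (mV (csrc b)) (mV (csrc a))"
      "T2 (HC (cval b) (cval a)) = C1 (mV (ctgt b)) (mV (ctgt a))"
      by (simp_all del: HC_expand add: HC_cell HC_src HC_tgt)
    show "tc_hcomp (mnd_cat K P) b a \<in> tc_cell (mnd_cat K P) \<and>
        tc_src2 (mnd_cat K P) (tc_hcomp (mnd_cat K P) b a) = tc_comp1 (mnd_cat K P) (tc_src2 (mnd_cat K P) b) (tc_src2 (mnd_cat K P) a) \<and>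
        tc_tgt2 (mnd_cat K P) (tc_hcomp (mnd_cat K P) b a) = tc_comp1 (mnd_cat K P) (tc_tgt2 (mnd_cat K P) b) (tc_tgt2 (mnd_cat K P) a)"
      using P H by (simp del: HC_expand add: mnd_cells em1_comp_rec)
  qed
  subgoal
  proof (intro ballI)
    fix a assume a: "a \<in> tc_cell (mnd_cat K P)"
    hence F: "is_em1 K (csrc a)" "is_em1 K (ctgt a)" "msrc (ctgt a) = msrc (csrc a)"
      "mtgt (ctgt a) = mtgt (csrc a)" "cval a \<in> Cl" "S2 (cval a) = mV (csrc a)" "T2 (cval a) = mV (ctgt a)"
      by (simp_all add: mnd_cells)
    have h1: "HC (I2 (I1 (mobj (mtgt (csrc a))))) (cval a) = cval a"
      using HC_unit(1)[of "cval a"] F by (simp del: HC_expand)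
    have h2: "HC (cval a) (I2 (I1 (mobj (msrc (csrc a))))) = cval a"
      using HC_unit(2)[of "cval a"] F by (simp del: HC_expand)
    have c1: "m_comp1 K (m_id1 K (mtgt (csrc a))) (ctgt a) = ctgt a" using comp_idL[of "ctgt a"] F by simp
    have c2: "m_comp1 K (ctgt a) (m_id1 K (msrc (csrc a))) = ctgt a" using comp_idR[of "ctgt a"] F by simp
    show "tc_hcomp (mnd_cat K P) (tc_id2 (mnd_cat K P) (tc_id1 (mnd_cat K P) (tc_tgt1 (mnd_cat K P) (tc_src2 (mnd_cat K P) a)))) a = a \<and>
      tc_hcomp (mnd_cat K P) a (tc_id2 (mnd_cat K P) (tc_id1 (mnd_cat K P) (tc_src1 (mnd_cat K P) (tc_src2 (mnd_cat K P) a)))) = a"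
      using h1 h2 c1 c2 comp_idL[OF F(1)] comp_idR[OF F(1)] by (simp del: HC_expand add: mcell.equality)
  qed
  subgoal
  proof (intro ballI impI)
    fix a b c assume a: "a \<in> tc_cell (mnd_cat K P)" and b: "b \<in> tc_cell (mnd_cat K P)"
      and c: "c \<in> tc_cell (mnd_cat K P)"
      and s: "tc_src1 (mnd_cat K P) (tc_src2 (mnd_cat K P) b) = tc_tgt1 (mnd_cat K P) (tc_src2 (mnd_cat K P) a)"
       "tc_src1 (mnd_cat K P) (tc_src2 (mnd_cat K P) c) = tc_tgt1 (mnd_cat K P) (tc_src2 (mnd_cat K P) b)"
    from a b c s have F: "is_em1 K (csrc a)" "is_em1 K (ctgt a)" "msrc (ctgt a) = msrc (csrc a)"
      "mtgt (ctgt a) = mtgt (csrc a)" "cval a \<in> Cl" "S2 (cval a) = mV (csrc a)" "T2 (cval a) = mV (ctgt a)"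
      "is_em1 K (csrc b)" "is_em1 K (ctgt b)" "msrc (ctgt b) = msrc (csrc b)"
      "mtgt (ctgt b) = mtgt (csrc b)" "cval b \<in> Cl" "S2 (cval b) = mV (csrc b)" "T2 (cval b) = mV (ctgt b)"
      "is_em1 K (csrc c)" "is_em1 K (ctgt c)" "msrc (ctgt c) = msrc (csrc c)"
      "mtgt (ctgt c) = mtgt (csrc c)" "cval c \<in> Cl" "S2 (cval c) = mV (csrc c)" "T2 (cval c) = mV (ctgt c)"
      "msrc (csrc b) = mtgt (csrc a)" "msrc (csrc c) = mtgt (csrc b)"
      by (simp_all add: mnd_cells)
    have h: "HC (cval c) (HC (cval b) (cval a)) = HC (HC (cval c) (cval b)) (cval a)"
      using HC_assoc[of "cval a" "cval b" "cval c"] F by (simp del: HC_expand)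
    have c1: "m_comp1 K (csrc c) (m_comp1 K (csrc b) (csrc a)) = m_comp1 K (m_comp1 K (csrc c) (csrc b)) (csrc a)"
      using comp_assoc[of "csrc a" "csrc b" "csrc c"] F by simp
    have c2: "m_comp1 K (ctgt c) (m_comp1 K (ctgt b) (ctgt a)) = m_comp1 K (m_comp1 K (ctgt c) (ctgt b)) (ctgt a)"
      using comp_assoc[of "ctgt a" "ctgt b" "ctgt c"] F by simp
    show "tc_hcomp (mnd_cat K P) c (tc_hcomp (mnd_cat K P) b a) = tc_hcomp (mnd_cat K P) (tc_hcomp (mnd_cat K P) c b) a"
      using h c1 c2 by (simp del: HC_expand)
  qed
  subgoal
  proof (intro ballI impI)
    fix f g assume f: "f \<in> tc_hom (mnd_cat K P)" and g: "g \<in> tc_hom (mnd_cat K P)"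
      and s: "tc_src1 (mnd_cat K P) g = tc_tgt1 (mnd_cat K P) f"
    from f g s have F: "is_em1 K f" "is_em1 K g" "msrc g = mtgt f" by simp_all
    have "HC (I2 (mV g)) (I2 (mV f)) = I2 (C1 (mV g) (mV f))" using HC_I2 F by (simp del: HC_expand)
    thus "tc_hcomp (mnd_cat K P) (tc_id2 (mnd_cat K P) g) (tc_id2 (mnd_cat K P) f) = tc_id2 (mnd_cat K P) (tc_comp1 (mnd_cat K P) g f)"
      by (simp del: HC_expand)
  qed
  subgoal
  proof (intro ballI impI)
    fix a b c d assume a: "a \<in> tc_cell (mnd_cat K P)" and b: "b \<in> tc_cell (mnd_cat K P)"
      and c: "c \<in> tc_cell (mnd_cat K P)" and d: "d \<in> tc_cell (mnd_cat K P)"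
      and s: "tc_src2 (mnd_cat K P) b = tc_tgt2 (mnd_cat K P) a" "tc_src2 (mnd_cat K P) d = tc_tgt2 (mnd_cat K P) c"
       "tc_src1 (mnd_cat K P) (tc_src2 (mnd_cat K P) c) = tc_tgt1 (mnd_cat K P) (tc_src2 (mnd_cat K P) a)"
    from a b c d s have F: "is_em1 K (csrc a)" "cval a \<in> Cl" "S2 (cval a) = mV (csrc a)" "T2 (cval a) = mV (ctgt a)"
      "cval b \<in> Cl" "S2 (cval b) = mV (csrc b)" "T2 (cval b) = mV (ctgt b)"
      "is_em1 K (csrc c)" "cval c \<in> Cl" "S2 (cval c) = mV (csrc c)" "T2 (cval c) = mV (ctgt c)"
      "cval d \<in> Cl" "S2 (cval d) = mV (csrc d)" "T2 (cval d) = mV (ctgt d)"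
      "csrc b = ctgt a" "csrc d = ctgt c" "msrc (csrc c) = mtgt (csrc a)"
      by (simp_all add: mnd_cells)
    have h: "HC (VC (cval d) (cval c)) (VC (cval b) (cval a)) = VC (HC (cval d) (cval b)) (HC (cval c) (cval a))"
      using interchange[of "cval a" "cval b" "cval c" "cval d"] F by (simp del: HC_expand)
    show "tc_hcomp (mnd_cat K P) (tc_vcomp (mnd_cat K P) d c) (tc_vcomp (mnd_cat K P) b a) =
      tc_vcomp (mnd_cat K P) (tc_hcomp (mnd_cat K P) d b) (tc_hcomp (mnd_cat K P) c a)"
      using h by (simp del: HC_expand)
  qed
  done


lemma em_sel[simp]: "tc_ob (em_w K) = {m. is_monad K m}" "tc_hom (em_w K) = {f. is_em1 K f}"
  "tc_cell (em_w K) = {c. parallel_mcell K c \<and> em_cell_cond K c}"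
  "tc_src1 (em_w K) = msrc" "tc_tgt1 (em_w K) = mtgt"
  "tc_src2 (em_w K) = csrc" "tc_tgt2 (em_w K) = ctgt" "tc_id1 (em_w K) = m_id1 K"
  "tc_comp1 (em_w K) = m_comp1 K"
  by (simp_all add: em_w_def)

lemma em_id2: "tc_id2 (em_w K) f = \<lparr>csrc = f, ctgt = f, cval = VC (mpsi f) (WR (munit (mtgt f)) (mV f))\<rparr>"
  by (simp add: em_w_def)

lemma mnd_functor:
  assumes Gs: "\<And>c. csrc (G c) = csrc c" "\<And>c. ctgt (G c) = ctgt c"
  and Gcell: "\<And>c. c \<in> tc_cell (mnd_cat K P) \<Longrightarrow> cval (G c) \<in> Cl \<and> em_cell_cond K (G c)"
  and Gid: "\<And>f. is_em1 K f \<Longrightarrow> G \<lparr>csrc = f, ctgt = f, cval = I2 (mV f)\<rparr> = tc_id2 (em_w K) f"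
  and Gvc: "\<And>c d. c \<in> tc_cell (mnd_cat K P) \<Longrightarrow> d \<in> tc_cell (mnd_cat K P) \<Longrightarrow> csrc d = ctgt c \<Longrightarrow>
     G \<lparr>csrc = csrc c, ctgt = ctgt d, cval = VC (cval d) (cval c)\<rparr> = tc_vcomp (em_w K) (G d) (G c)"
  and Ghc: "\<And>c d. c \<in> tc_cell (mnd_cat K P) \<Longrightarrow> d \<in> tc_cell (mnd_cat K P) \<Longrightarrow> msrc (csrc d) = mtgt (csrc c) \<Longrightarrow>
     G \<lparr>csrc = m_comp1 K (csrc d) (csrc c), ctgt = m_comp1 K (ctgt d) (ctgt c), cval = HC (cval d) (cval c)\<rparr>
       = tc_hcomp (em_w K) (G d) (G c)"
  shows "two_functor (mnd_cat K P) (em_w K) id id G"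
  unfolding two_functor_def
  apply (intro conjI)
  subgoal by simp
  subgoal by simp
  subgoal using Gcell by (auto simp: Gs mnd_cells parallel_mcell_def)
  subgoal by simp
  subgoal by simp
  subgoal using Gid by simp
  subgoal using Gvc by simp
  subgoal using Ghc by (simp del: HC_expand)
  done

lemma cellD: assumes "c \<in> tc_cell (mnd_cat K P)"
  shows "mon (mobj (msrc (csrc c))) (mfun (msrc (csrc c))) (mmult (msrc (csrc c))) (munit (msrc (csrc c)))"
    "mon (mobj (mtgt (csrc c))) (mfun (mtgt (csrc c))) (mmult (mtgt (csrc c))) (munit (mtgt (csrc c)))"
    "monl (mfun (msrc (csrc c))) (mmult (msrc (csrc c))) (munit (msrc (csrc c)))"
    "monl (mfun (mtgt (csrc c))) (mmult (mtgt (csrc c))) (munit (mtgt (csrc c)))"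
    "m1 (mobj (msrc (csrc c))) (mobj (mtgt (csrc c))) (mfun (msrc (csrc c))) (mfun (mtgt (csrc c))) (mV (csrc c)) (mpsi (csrc c))"
    "m1l (mfun (msrc (csrc c))) (mmult (msrc (csrc c))) (mfun (mtgt (csrc c))) (mmult (mtgt (csrc c))) (mV (csrc c)) (mpsi (csrc c))"
    "m1 (mobj (msrc (csrc c))) (mobj (mtgt (csrc c))) (mfun (msrc (csrc c))) (mfun (mtgt (csrc c))) (mV (ctgt c)) (mpsi (ctgt c))"
    "m1l (mfun (msrc (csrc c))) (mmult (msrc (csrc c))) (mfun (mtgt (csrc c))) (mmult (mtgt (csrc c))) (mV (ctgt c)) (mpsi (ctgt c))"
    "c2 (mV (csrc c)) (mV (ctgt c)) (cval c)"
    "P c" "is_em1 K (csrc c)" "is_em1 K (ctgt c)" "msrc (ctgt c) = msrc (csrc c)" "mtgt (ctgt c) = mtgt (csrc c)"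
proof -
  from assms have F: "is_em1 K (csrc c)" "is_em1 K (ctgt c)" "msrc (ctgt c) = msrc (csrc c)"
      "mtgt (ctgt c) = mtgt (csrc c)" "cval c \<in> Cl" "S2 (cval c) = mV (csrc c)" "T2 (cval c) = mV (ctgt c)" "P c"
    by (simp_all add: mnd_cells)
  from F(1) show "mon (mobj (msrc (csrc c))) (mfun (msrc (csrc c))) (mmult (msrc (csrc c))) (munit (msrc (csrc c)))"
    "mon (mobj (mtgt (csrc c))) (mfun (mtgt (csrc c))) (mmult (mtgt (csrc c))) (munit (mtgt (csrc c)))"
    "monl (mfun (msrc (csrc c))) (mmult (msrc (csrc c))) (munit (msrc (csrc c)))"
    "monl (mfun (mtgt (csrc c))) (mmult (mtgt (csrc c))) (munit (mtgt (csrc c)))"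
    "m1 (mobj (msrc (csrc c))) (mobj (mtgt (csrc c))) (mfun (msrc (csrc c))) (mfun (mtgt (csrc c))) (mV (csrc c)) (mpsi (csrc c))"
    "m1l (mfun (msrc (csrc c))) (mmult (msrc (csrc c))) (mfun (mtgt (csrc c))) (mmult (mtgt (csrc c))) (mV (csrc c)) (mpsi (csrc c))"
    by (simp_all add: em1_iff monad_iff)
  from F(2-4) show "m1 (mobj (msrc (csrc c))) (mobj (mtgt (csrc c))) (mfun (msrc (csrc c))) (mfun (mtgt (csrc c))) (mV (ctgt c)) (mpsi (ctgt c))"
    "m1l (mfun (msrc (csrc c))) (mmult (msrc (csrc c))) (mfun (mtgt (csrc c))) (mmult (mtgt (csrc c))) (mV (ctgt c)) (mpsi (ctgt c))"
    by (simp_all add: em1_iff)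
  from F(5-7) show "c2 (mV (csrc c)) (mV (ctgt c)) (cval c)" by (simp add: c2_def)
  from F show "P c" "is_em1 K (csrc c)" "is_em1 K (ctgt c)" "msrc (ctgt c) = msrc (csrc c)" "mtgt (ctgt c) = mtgt (csrc c)"
    by simp_all
qed

lemma em1D: assumes "is_em1 K f"
  shows "mon (mobj (msrc f)) (mfun (msrc f)) (mmult (msrc f)) (munit (msrc f))"
    "mon (mobj (mtgt f)) (mfun (mtgt f)) (mmult (mtgt f)) (munit (mtgt f))"
    "monl (mfun (msrc f)) (mmult (msrc f)) (munit (msrc f))"
    "monl (mfun (mtgt f)) (mmult (mtgt f)) (munit (mtgt f))"
    "m1 (mobj (msrc f)) (mobj (mtgt f)) (mfun (msrc f)) (mfun (mtgt f)) (mV f) (mpsi f)"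
    "m1l (mfun (msrc f)) (mmult (msrc f)) (mfun (mtgt f)) (mmult (mtgt f)) (mV f) (mpsi f)"
  using assms by (simp_all add: em1_iff monad_iff)


lemma iota_2cat: "two_category (mnd_iota K)"
  unfolding mnd_iota_def
proof (rule mnd_cat_2cat)
  fix f assume f: "is_em1 K f"
  note D = em1D[OF f]
  show "iota_cond K \<lparr>csrc = f, ctgt = f, cval = I2 (mV f)\<rparr>"
    unfolding iota_cond_def Let_def mcell.select_convs by (rule iota_id[OF D])
next
  fix c d assume c: "c \<in> tc_cell (mnd_cat K (iota_cond K))" and d: "d \<in> tc_cell (mnd_cat K (iota_cond K))"
    and e: "csrc d = ctgt c"
  note D = cellD[OF c]
  note E = cellD[OF d, unfolded e D(13) D(14)]
  note I = D(10)[unfolded iota_cond_def Let_def] and I' = E(10)[unfolded iota_cond_def Let_def e D(13) D(14)]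
  show "iota_cond K \<lparr>csrc = csrc c, ctgt = ctgt d, cval = VC (cval d) (cval c)\<rparr>"
    unfolding iota_cond_def Let_def mcell.select_convs
    by (rule iota_vc[OF D(1-4) D(5,6) D(7,8) E(7,8) D(9) E(9) I I'])
next
  fix c d assume c: "c \<in> tc_cell (mnd_cat K (iota_cond K))" and d: "d \<in> tc_cell (mnd_cat K (iota_cond K))"
    and e: "msrc (csrc d) = mtgt (csrc c)"
  note D = cellD[OF c]
  note E = cellD[OF d, unfolded e]
  note I = D(10)[unfolded iota_cond_def Let_def] and I' = E(10)[unfolded iota_cond_def Let_def e]
  show "iota_cond K \<lparr>csrc = m_comp1 K (csrc d) (csrc c), ctgt = m_comp1 K (ctgt d) (ctgt c), cval = HC (cval d) (cval c)\<rparr>"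
    unfolding iota_cond_def Let_def mcell.select_convs m_comp1_def mmor.select_convs
    by (rule iota_hc[OF D(1,2) E(2) D(3,4) E(4) D(5,6) D(7,8) E(5,6) E(7,8) D(9) E(9) I I'])
qed

lemma pi_2cat: "two_category (mnd_pi K)"
  unfolding mnd_pi_def
proof (rule mnd_cat_2cat)
  fix f assume f: "is_em1 K f"
  note D = em1D[OF f]
  show "pi_cond K \<lparr>csrc = f, ctgt = f, cval = I2 (mV f)\<rparr>"
    unfolding pi_cond_def Let_def mcell.select_convs by (rule pi_id[OF D])
next
  fix c d assume c: "c \<in> tc_cell (mnd_cat K (pi_cond K))" and d: "d \<in> tc_cell (mnd_cat K (pi_cond K))"
    and e: "csrc d = ctgt c"
  note D = cellD[OF c]
  note E = cellD[OF d, unfolded e D(13) D(14)]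
  note I = D(10)[unfolded pi_cond_def Let_def] and I' = E(10)[unfolded pi_cond_def Let_def e D(13) D(14)]
  show "pi_cond K \<lparr>csrc = csrc c, ctgt = ctgt d, cval = VC (cval d) (cval c)\<rparr>"
    unfolding pi_cond_def Let_def mcell.select_convs
    by (rule pi_vc[OF D(1-4) D(5,6) D(7,8) E(7,8) D(9) E(9) I I'])
next
  fix c d assume c: "c \<in> tc_cell (mnd_cat K (pi_cond K))" and d: "d \<in> tc_cell (mnd_cat K (pi_cond K))"
    and e: "msrc (csrc d) = mtgt (csrc c)"
  note D = cellD[OF c]
  note E = cellD[OF d, unfolded e]
  note I = D(10)[unfolded pi_cond_def Let_def] and I' = E(10)[unfolded pi_cond_def Let_def e]
  show "pi_cond K \<lparr>csrc = m_comp1 K (csrc d) (csrc c), ctgt = m_comp1 K (ctgt d) (ctgt c), cval = HC (cval d) (cval c)\<rparr>"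
    unfolding pi_cond_def Let_def mcell.select_convs m_comp1_def mmor.select_convs
    by (rule pi_hc[OF D(1,2) E(2) D(3,4) E(4) D(5,6) D(7,8) E(5,6) E(7,8) D(9) E(9) I I'])
qed


lemma em_vc: "tc_vcomp (em_w K) d c = \<lparr>csrc = csrc c, ctgt = ctgt d,
        cval = VC (WL (mV (ctgt d)) (mmult (msrc (csrc c)))) (VC (WR (cval d) (mfun (msrc (csrc c)))) (cval c))\<rparr>"
  by (simp add: em_w_def)

lemma em_hc: "tc_hcomp (em_w K) c' c = \<lparr>csrc = m_comp1 K (csrc c') (csrc c), ctgt = m_comp1 K (ctgt c') (ctgt c),
        cval = VC (WL (C1 (mV (ctgt c')) (mV (ctgt c))) (mmult (msrc (csrc c))))
                  (VC (WL (mV (ctgt c')) (WR (cval c) (mfun (msrc (csrc c)))))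
                    (VC (WL (mV (ctgt c')) (mpsi (csrc c))) (WR (cval c') (mV (csrc c)))))\<rparr>"
  by (simp add: em_w_def Let_def)

lemma mpsi_comp[simp]: "mpsi (m_comp1 K g f) = VC (WL (mV g) (mpsi f)) (WR (mpsi g) (mV f))"
  by (simp add: m_comp1_def)

lemma iota_functor: "two_functor (mnd_iota K) (em_w K) id id (G_iota K)"
  unfolding mnd_iota_def
proof (rule mnd_functor)
  fix c show "csrc (G_iota K c) = csrc c" "ctgt (G_iota K c) = ctgt c" by (simp_all add: G_iota_def)
next
  fix c assume c: "c \<in> tc_cell (mnd_cat K (iota_cond K))"
  note D = cellD[OF c]
  note I = D(10)[unfolded iota_cond_def Let_def]
  note c1 = iota_to_c1[OF D(1-4) D(5,6) D(7) D(9) I]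
  note c2 = lemX[OF D(1-4) D(5) D(7) D(9) I]
  note [simp] = D(1,2)[unfolded mon_def] D(5,7)[unfolded m1_def] D(9)[unfolded c2_def]
  show "cval (G_iota K c) \<in> Cl \<and> em_cell_cond K (G_iota K c)"
    using c1 c2 by (simp add: G_iota_def em_cell_cond_def Let_def)
next
  fix f assume f: "is_em1 K f"
  note D = em1D[OF f]
  note [simp] = D(1,2)[unfolded mon_def] D(5)[unfolded m1_def]
  show "G_iota K \<lparr>csrc = f, ctgt = f, cval = I2 (mV f)\<rparr> = tc_id2 (em_w K) f"
    by (simp add: G_iota_def em_id2)
next
  fix c d assume c: "c \<in> tc_cell (mnd_cat K (iota_cond K))" and d: "d \<in> tc_cell (mnd_cat K (iota_cond K))"
    and e: "csrc d = ctgt c"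
  note D = cellD[OF c]
  note E = cellD[OF d, unfolded e D(13) D(14)]
  note I = D(10)[unfolded iota_cond_def Let_def]
  note Gv = gi_vc[OF D(1-4) D(5) D(7) E(7) D(9) E(9) I]
  note [simp] = D(1,2)[unfolded mon_def] D(5,7)[unfolded m1_def] D(9)[unfolded c2_def]
    E(7)[unfolded m1_def] E(9)[unfolded c2_def] e D(13) D(14)
  show "G_iota K \<lparr>csrc = csrc c, ctgt = ctgt d, cval = VC (cval d) (cval c)\<rparr> = tc_vcomp (em_w K) (G_iota K d) (G_iota K c)"
    using Gv by (simp add: G_iota_def em_vc)
next
  fix c d assume c: "c \<in> tc_cell (mnd_cat K (iota_cond K))" and d: "d \<in> tc_cell (mnd_cat K (iota_cond K))"
    and e: "msrc (csrc d) = mtgt (csrc c)"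
  note D = cellD[OF c]
  note E = cellD[OF d, unfolded e]
  note Gh = gi_hc[OF D(1,2) E(2) D(3,4) E(4) D(5) D(6) D(7) E(5) E(7) D(9) E(9)]
  note [simp] = D(1,2)[unfolded mon_def] E(2)[unfolded mon_def] D(5,7)[unfolded m1_def] D(9)[unfolded c2_def]
    E(5,7)[unfolded m1_def] E(9)[unfolded c2_def] e D(13) D(14) E(13) E(14)
  show "G_iota K \<lparr>csrc = m_comp1 K (csrc d) (csrc c), ctgt = m_comp1 K (ctgt d) (ctgt c), cval = HC (cval d) (cval c)\<rparr>
       = tc_hcomp (em_w K) (G_iota K d) (G_iota K c)"
    using Gh by (simp add: G_iota_def em_hc)
qed

lemma pi_functor: "two_functor (mnd_pi K) (em_w K) id id (G_pi K)"
  unfolding mnd_pi_def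
proof (rule mnd_functor)
  fix c show "csrc (G_pi K c) = csrc c" "ctgt (G_pi K c) = ctgt c" by (simp_all add: G_pi_def)
next
  fix c assume c: "c \<in> tc_cell (mnd_cat K (pi_cond K))"
  note D = cellD[OF c]
  note I = D(10)[unfolded pi_cond_def Let_def]
  note c1 = pi_to_c1[OF D(1-4) D(5) D(7) D(8) D(9) I]
  note c2 = gp_c2[OF D(1-4) D(5) D(7) D(8) D(9)]
  note [simp] = D(1,2)[unfolded mon_def] D(5,7)[unfolded m1_def] D(9)[unfolded c2_def]
  show "cval (G_pi K c) \<in> Cl \<and> em_cell_cond K (G_pi K c)"
    using c1 c2 by (simp add: G_pi_def em_cell_cond_def Let_def)
next
  fix f assume f: "is_em1 K f"
  note D = em1D[OF f]
  note [simp] = D(1,2)[unfolded mon_def] D(5)[unfolded m1_def]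
  show "G_pi K \<lparr>csrc = f, ctgt = f, cval = I2 (mV f)\<rparr> = tc_id2 (em_w K) f"
    by (simp add: G_pi_def em_id2)
next
  fix c d assume c: "c \<in> tc_cell (mnd_cat K (pi_cond K))" and d: "d \<in> tc_cell (mnd_cat K (pi_cond K))"
    and e: "csrc d = ctgt c"
  note D = cellD[OF c]
  note E = cellD[OF d, unfolded e D(13) D(14)]
  note I' = E(10)[unfolded pi_cond_def Let_def e D(13) D(14)]
  note Gv = gp_vc[OF D(1-4) D(5) D(7) E(7) D(9) E(9) I']
  note [simp] = D(1,2)[unfolded mon_def] D(5,7)[unfolded m1_def] D(9)[unfolded c2_def]
    E(7)[unfolded m1_def] E(9)[unfolded c2_def] e D(13) D(14)
  show "G_pi K \<lparr>csrc = csrc c, ctgt = ctgt d, cval = VC (cval d) (cval c)\<rparr> = tc_vcomp (em_w K) (G_pi K d) (G_pi K c)"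
    using Gv by (simp add: G_pi_def em_vc)
next
  fix c d assume c: "c \<in> tc_cell (mnd_cat K (pi_cond K))" and d: "d \<in> tc_cell (mnd_cat K (pi_cond K))"
    and e: "msrc (csrc d) = mtgt (csrc c)"
  note D = cellD[OF c]
  note E = cellD[OF d, unfolded e]
  note I = D(10)[unfolded pi_cond_def Let_def]
  note Gh = gp_hc[OF D(1,2) E(2) D(5) D(7) E(5) E(7) D(9) E(9) I]
  note [simp] = D(1,2)[unfolded mon_def] E(2)[unfolded mon_def] D(5,7)[unfolded m1_def] D(9)[unfolded c2_def]
    E(5,7)[unfolded m1_def] E(9)[unfolded c2_def] e D(13) D(14) E(13) E(14)
  show "G_pi K \<lparr>csrc = m_comp1 K (csrc d) (csrc c), ctgt = m_comp1 K (ctgt d) (ctgt c), cval = HC (cval d) (cval c)\<rparr>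
       = tc_hcomp (em_w K) (G_pi K d) (G_pi K c)"
    using Gh by (simp add: G_pi_def em_hc)
qed

end

theorem corollary1p4:
  fixes K :: "('o, 'a, 'c) two_cat"
  assumes "two_category K"
  shows "two_category (mnd_iota K) \<and> two_functor (mnd_iota K) (em_w K) id id (G_iota K) \<and>
         two_category (mnd_pi K) \<and> two_functor (mnd_pi K) (em_w K) id id (G_pi K)"
proof -
  interpret tcat K by (rule tcat.intro) (rule assms)
  show ?thesis using iota_2cat iota_functor pi_2cat pi_functor by simp
qed

end
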